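(* Let $\mathcal{N}$ (from $X$, $|X|=m$, to $Y$, $|Y|=n$) and $\mathcal{M}$ (from $X'$, $|X'|=m'$, to $Y$) be classical channels whose columns $\mathbf{p}_x=\mathcal{N}(\mathbf{e}_x)$, $x\in[m]$, and $\mathbf{q}_w=\mathcal{M}(\mathbf{e}_w)$, $w\in[m']$, all have entries in non-increasing order (e.g. both channels are in standard form). The following are equivalent: (1) $\mathcal{N}\succ\mathcal{M}$; (2) $\mathrm{Conv}(\mathcal{N})\succ\mathrm{Conv}(\mathcal{M})$ as sets; (3) there is an $m\times m'$ column-stochastic matrix $S=(s_{x|w})$ with $\sum_{x\in[m]}s_{x|w}\mathbf{p}_x\succ\mathbf{q}_w$ for all $w\in[m']$; (4) for all $\mathbf{s}\in\mathrm{Prob}^{\downarrow}(n)$, $\max_{x\in[m]}\mathbf{s}\cdot\mathbf{p}_x\ge\max_{w\in[m']}\mathbf{s}\cdot\mathbf{q}_w$; (5) for all $\mathbf{t}\in\mathrm{Prob}(n)$ and all $w\in[m']$, $\max_{x\in[m]}\sum_{k\in[n]}t_k\frac{\|\mathbf{p}_x\|_{(k)}}{\|\mathbf{q}_w\|_{(k)}}\ge1$.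
   Context: A classical channel is given by a column-stochastic transition matrix; $\mathbf{e}_x$ are standard basis vectors. For $\mathbf{p}\in\mathrm{Prob}(n)$, $\|\mathbf{p}\|_{(k)}$ is the sum of its $k$ largest entries; $\mathbf{p}\succ\mathbf{q}$ means $\|\mathbf{p}\|_{(k)}\ge\|\mathbf{q}\|_{(k)}$ for all $k\in[n]$. $\mathrm{Prob}^{\downarrow}(n)$ is the set of probability vectors with non-increasing entries. $\mathrm{Conv}(\mathcal{N})$ and $\mathrm{Conv}(\mathcal{M})$ are the convex hulls of $\{\mathbf{p}_x\}$ and $\{\mathbf{q}_w\}$. For sets $\mathfrak{K}_1,\mathfrak{K}_2\subseteq\mathrm{Prob}(n)$, $\mathfrak{K}_1\succ\mathfrak{K}_2$ means every $\mathbf{q}\in\mathfrak{K}_2$ is majorized by some $\mathbf{p}\in\mathfrak{K}_1$. Classical channel majorization $\mathcal{N}\succ\mathcal{M}$: there is a random permutation superchannel $\Theta$ with $\mathcal{M}=\Theta[\mathcal{N}]$, i.e. $\Theta[\mathcal{N}]=\mathcal{D}^{YZ\to Y}\circ(\mathcal{N}\otimes\mathrm{id}^Z)\circ\mathcal{S}^{X'\to XZ}$ for a finite classical system $Z$, classical channels $\mathcal{S},\mathcal{D}$, with $\mathcal{D}(\cdot\otimes\mathbf{e}_z)$ doubly stochastic for every $z$. *)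

theory Defs
  imports Complex_Main
begin

text \<open>Conventions: a vector in R^n is a function nat => real, only indices i < n matter
 (index i corresponds to the paper's index i+1).  A channel from an m-element system to an
 n-element system is a matrix A :: nat => nat => real with A y x the probability of output y
 on input x (y < n, x < m); its x-th column is the vector (\<lambda>y. A y x).\<close>

definition prob_vec :: "nat \<Rightarrow> (nat \<Rightarrow> real) \<Rightarrow> bool" where
  "prob_vec n p \<longleftrightarrow> (\<forall>i<n. 0 \<le> p i) \<and> (\<Sum>i<n. p i) = 1"

definition nonincreasing :: "nat \<Rightarrow> (nat \<Rightarrow> real) \<Rightarrow> bool" where
  "nonincreasing n p \<longleftrightarrow> (\<forall>i j. i \<le> j \<longrightarrow> j < n \<longrightarrow> p j \<le> p i)"

definition prob_vec_desc :: "nat \<Rightarrow> (nat \<Rightarrow> real) \<Rightarrow> bool" where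
  "prob_vec_desc n p \<longleftrightarrow> prob_vec n p \<and> nonincreasing n p"

definition col_stochastic :: "nat \<Rightarrow> nat \<Rightarrow> (nat \<Rightarrow> nat \<Rightarrow> real) \<Rightarrow> bool" where
  "col_stochastic n m A \<longleftrightarrow> (\<forall>x<m. prob_vec n (\<lambda>y. A y x))"

definition doubly_stochastic :: "nat \<Rightarrow> (nat \<Rightarrow> nat \<Rightarrow> real) \<Rightarrow> bool" where
  "doubly_stochastic n A \<longleftrightarrow> (\<forall>i<n. \<forall>j<n. 0 \<le> A i j) \<and>
     (\<forall>j<n. (\<Sum>i<n. A i j) = 1) \<and> (\<forall>i<n. (\<Sum>j<n. A i j) = 1)"

definition kyfan :: "nat \<Rightarrow> (nat \<Rightarrow> real) \<Rightarrow> nat \<Rightarrow> real" where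
  "kyfan n p k = Max {(\<Sum>i\<in>I. p i) | I. I \<subseteq> {..<n} \<and> card I = k}"

definition majorizes :: "nat \<Rightarrow> (nat \<Rightarrow> real) \<Rightarrow> (nat \<Rightarrow> real) \<Rightarrow> bool" where
  "majorizes n p q \<longleftrightarrow> (\<forall>k\<in>{1..n}. kyfan n q k \<le> kyfan n p k)"

definition conv_channel :: "nat \<Rightarrow> nat \<Rightarrow> (nat \<Rightarrow> nat \<Rightarrow> real) \<Rightarrow> (nat \<Rightarrow> real) set" where
  "conv_channel n m A = {(\<lambda>y. if y < n then (\<Sum>x<m. c x * A y x) else 0) | c. prob_vec m c}"

definition set_majorizes :: "nat \<Rightarrow> (nat \<Rightarrow> real) set \<Rightarrow> (nat \<Rightarrow> real) set \<Rightarrow> bool" where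
  "set_majorizes n K1 K2 \<longleftrightarrow> (\<forall>q\<in>K2. \<exists>p\<in>K1. majorizes n p q)"

text \<open>Classical channel majorization N \<succ> M: M = D o (N \<otimes> id_Z) o S, where Z has l elements,
 S : X' -> X Z is a channel (S x z w = probability of (x,z) given w), and
 D : Y Z -> Y is a channel with D(. \<otimes> e_z) = D z doubly stochastic for each z
 (D z y' y = probability of output y' given input (y,z)).\<close>
definition channel_majorizes ::
  "nat \<Rightarrow> nat \<Rightarrow> (nat \<Rightarrow> nat \<Rightarrow> real) \<Rightarrow> nat \<Rightarrow> (nat \<Rightarrow> nat \<Rightarrow> real) \<Rightarrow> bool" where
  "channel_majorizes n m N m' M \<longleftrightarrow>
    (\<exists>(l::nat) (S::nat \<Rightarrow> nat \<Rightarrow> nat \<Rightarrow> real) (D::nat \<Rightarrow> nat \<Rightarrow> nat \<Rightarrow> real).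
       (\<forall>w<m'. (\<forall>x<m. \<forall>z<l. 0 \<le> S x z w) \<and> (\<Sum>x<m. \<Sum>z<l. S x z w) = 1) \<and>
       (\<forall>z<l. doubly_stochastic n (D z)) \<and>
       (\<forall>w<m'. \<forall>y'<n. M y' w = (\<Sum>x<m. \<Sum>z<l. S x z w * (\<Sum>y<n. D z y' y * N y x))))"

end

theory Submission
  imports Defs
begin

lemma sum_delta1:
  fixes g :: "'a \<Rightarrow> real"
  assumes "finite A" "z \<in> A"
  shows "(\<Sum>v\<in>A. (if v = z then 1 else 0) * g v) = g z"
proof -
  have "(\<Sum>v\<in>A. (if v = z then 1 else 0) * g v) = (\<Sum>v\<in>A. (if v = z then g v else 0))"
    by (rule sum.cong) auto
  also have "\<dots> = g z" using assms by (simp add: sum.delta')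
  finally show ?thesis .
qed

lemma sum_delta2:
  fixes g :: "'a \<Rightarrow> real"
  assumes "finite A" "v \<in> A" "u \<in> A" "v \<noteq> u"
  shows "(\<Sum>w\<in>A. (if w = v then \<alpha> else if w = u then \<beta> else 0) * g w) = \<alpha> * g v + \<beta> * g u"
proof -
  have "(\<Sum>w\<in>A. (if w = v then \<alpha> else if w = u then \<beta> else 0) * g w)
      = (\<Sum>w\<in>A. (if w = v then \<alpha> * g v else 0) + (if w = u then \<beta> * g u else 0))"
    by (rule sum.cong) (use assms in auto)
  also have "\<dots> = \<alpha> * g v + \<beta> * g u" using assms by (simp add: sum.distrib sum.delta')
  finally show ?thesis .
qed

lemma pos_sum_exists:
  fixes c :: "'a \<Rightarrow> real"
  assumes "finite A" "\<forall>x\<in>A. 0 \<le> c x" "0 < sum c A"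
  shows "\<exists>x\<in>A. 0 < c x"
proof (rule ccontr)
  assume "\<not> ?thesis"
  then have "\<forall>x\<in>A. c x = 0" using assms(2) by force
  then have "sum c A = 0" by simp
  then show False using assms(3) by simp
qed

lemma gordan_set:
  fixes n :: nat
  shows "finite V \<Longrightarrow> V \<noteq> {} \<Longrightarrow>
    (\<forall>a. (\<forall>k<n. 0 \<le> a k) \<longrightarrow> (\<exists>v\<in>V. 0 \<le> (\<Sum>k<n. a k * v k))) \<Longrightarrow>
    \<exists>c. (\<forall>v\<in>V. 0 \<le> c v) \<and> 0 < (\<Sum>v\<in>V. c v) \<and> (\<forall>k<n. 0 \<le> (\<Sum>v\<in>V. c v * (v k :: real)))"
proof (induction n arbitrary: V)
  case 0
  then show ?case
    by (intro exI[of _ "\<lambda>v. 1"]) (auto simp: card_gt_0_iff)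
next
  case (Suc n)
  note fin = Suc.prems(1) and ne = Suc.prems(2) and H = Suc.prems(3)
  define P where "P = {v\<in>V. 0 \<le> v n}"
  define Ng where "Ng = {v\<in>V. v n < 0}"
  have finP: "finite P" and finNg: "finite Ng" using fin by (auto simp: P_def Ng_def)
  have "P \<noteq> {}"
  proof
    assume P0: "P = {}"
    have "\<exists>v\<in>V. 0 \<le> (\<Sum>k<Suc n. (if k = n then 1 else 0) * v k)"
      by (rule H[rule_format]) simp
    then obtain v where "v \<in> V" "0 \<le> v n" by auto
    then show False using P0 by (auto simp: P_def)
  qed
  define comb where "comb v u = (\<lambda>k. (- u n) * v k + v n * u k)" for v u :: "nat \<Rightarrow> real"
  define V' where "V' = P \<union> (\<lambda>(v,u). comb v u) ` (P \<times> Ng)"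
  have finV': "finite V'" using finP finNg by (simp add: V'_def)
  have neV': "V' \<noteq> {}" using \<open>P \<noteq> {}\<close> by (simp add: V'_def)
  have H': "\<forall>a. (\<forall>k<n. 0 \<le> a k) \<longrightarrow> (\<exists>z\<in>V'. 0 \<le> (\<Sum>k<n. a k * z k))"
  proof (intro allI impI, rule ccontr)
    fix a :: "nat \<Rightarrow> real"
    assume a0: "\<forall>k<n. 0 \<le> a k" and nex: "\<not> (\<exists>z\<in>V'. 0 \<le> (\<Sum>k<n. a k * z k))"
    define A where "A z = (\<Sum>k<n. a k * z k)" for z :: "nat \<Rightarrow> real"
    have AV': "\<forall>z\<in>V'. A z < 0" using nex by (auto simp: A_def not_le)
    have AP: "\<forall>v\<in>P. A v < 0" using AV' by (auto simp: V'_def)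
    have Acomb: "A (comb v u) = (- u n) * A v + v n * A u" for v u
      unfolding A_def comb_def by (simp add: sum_distrib_left ring_distribs sum.distrib mult_ac sum_negf sum_subtractf)
    have Apair: "\<forall>v\<in>P. \<forall>u\<in>Ng. (- u n) * A v + v n * A u < 0"
    proof (intro ballI)
      fix v u assume "v \<in> P" "u \<in> Ng"
      then have "comb v u \<in> V'" by (force simp: V'_def)
      then show "(- u n) * A v + v n * A u < 0" using AV' Acomb by auto
    qed
    define Lows where "Lows = insert 0 ((\<lambda>u. A u / (- u n)) ` Ng)"
    define L where "L = Max Lows"
    define Up where "Up = (\<lambda>v. - A v / v n) ` {v\<in>P. 0 < v n}"
    have finLows: "finite Lows" and neLows: "Lows \<noteq> {}" using finNg by (auto simp: Lows_def)
    have finUp: "finite Up" using finP by (simp add: Up_def)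
    have L0: "0 \<le> L" using finLows by (simp add: L_def Lows_def)
    have Lu: "\<forall>u\<in>Ng. A u / (- u n) \<le> L" using finLows by (simp add: L_def Lows_def)
    have LUp: "\<forall>x\<in>Up. L < x"
    proof
      fix x assume "x \<in> Up"
      then obtain v where v: "v \<in> P" "0 < v n" "x = - A v / v n" by (auto simp: Up_def)
      have "A v < 0" using v AP by blast
      then have xpos: "0 < x" using v(2,3) by (simp add: divide_neg_pos)
      have "\<forall>y\<in>Lows. y < x"
      proof
        fix y assume "y \<in> Lows"
        then consider "y = 0" | u where "u \<in> Ng" "y = A u / (- u n)" by (auto simp: Lows_def)
        then show "y < x"
        proof cases
          case 1 then show ?thesis using xpos by simp
        next
          case 2
          have un: "0 < - u n" using 2 by (simp add: Ng_def)
          have "(- u n) * A v + v n * A u < 0" using Apair v(1) 2(1) by auto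
          then have "A u / (- u n) < - A v / v n"
            using un v(2) by (simp add: field_simps)
          then show ?thesis using 2 v by simp
        qed
      qed
      then show "L < x" using finLows neLows by (simp add: L_def)
    qed
    define t where "t = (if Up = {} then L + 1 else (L + Min Up) / 2)"
    have Lt: "L < t"
    proof (cases "Up = {}")
      case True then show ?thesis by (simp add: t_def)
    next
      case False
      then have "L < Min Up" using LUp finUp by simp
      then show ?thesis using False by (simp add: t_def)
    qed
    have tUp: "\<forall>x\<in>Up. t < x"
    proof
      fix x assume x: "x \<in> Up"
      then have ne: "Up \<noteq> {}" by auto
      have "Min Up \<le> x" using x finUp by simp
      moreover have "L < Min Up" using LUp finUp ne by simp
      ultimately show "t < x" using ne by (simp add: t_def)
    qed
    define a' where "a' = a(n := t)"
    have a'0: "\<forall>k<Suc n. 0 \<le> a' k" using a0 L0 Lt by (auto simp: a'_def less_Suc_eq)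
    obtain v where vV: "v \<in> V" and v0: "0 \<le> (\<Sum>k<Suc n. a' k * v k)"
      using mp[OF spec[OF H, of a'] a'0] by blast
    have "(\<Sum>k<Suc n. a' k * v k) = A v + t * v n"
      by (simp add: A_def a'_def)
    with v0 have key: "0 \<le> A v + t * v n" by simp
    show False
    proof (cases "v n < 0")
      case True
      then have "v \<in> Ng" using vV by (simp add: Ng_def)
      then have "A v / (- v n) < t" using Lu Lt by force
      then have "A v < t * (- v n)" using True by (simp add: field_simps)
      then show False using key by simp
    next
      case False
      then have vP: "v \<in> P" using vV by (simp add: P_def)
      show False
      proof (cases "v n = 0")
        case True then show False using key AP vP by force
      next
        case False
        then have pos: "0 < v n" using \<open>\<not> v n < 0\<close> by simp
        then have "- A v / v n \<in> Up" using vP by (auto simp: Up_def)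
        then have "t < - A v / v n" using tUp by blast
        then have "t * v n < - A v" using pos by (simp add: field_simps)
        then show False using key by simp
      qed
    qed
  qed
  obtain c' where c'0: "\<forall>z\<in>V'. 0 \<le> c' z" and c'pos: "0 < (\<Sum>z\<in>V'. c' z)"
    and c'k: "\<forall>k<n. 0 \<le> (\<Sum>z\<in>V'. c' z * z k)"
    using Suc.IH[OF finV' neV' H'] by blast
  have rep: "\<forall>z\<in>V'. \<exists>C. (\<forall>v\<in>V. 0 \<le> C v) \<and> 0 < (\<Sum>v\<in>V. C v) \<and>
       (\<forall>k<n. z k = (\<Sum>v\<in>V. C v * v k)) \<and> 0 \<le> (\<Sum>v\<in>V. C v * v n)"
  proof
    fix z assume "z \<in> V'"
    then consider "z \<in> P" | v u where "v \<in> P" "u \<in> Ng" "z = comb v u" by (auto simp: V'_def)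
    then show "\<exists>C. (\<forall>v\<in>V. 0 \<le> C v) \<and> 0 < (\<Sum>v\<in>V. C v) \<and>
       (\<forall>k<n. z k = (\<Sum>v\<in>V. C v * v k)) \<and> 0 \<le> (\<Sum>v\<in>V. C v * v n)"
    proof cases
      case 1
      then have zV: "z \<in> V" and zn: "0 \<le> z n" by (auto simp: P_def)
      have s1: "(\<Sum>v\<in>V. (if v = z then 1 else 0) :: real) = 1" using fin zV by (simp add: sum.delta')
      show ?thesis
        by (intro exI[of _ "\<lambda>v. if v = z then 1 else 0"]) (simp add: s1 sum_delta1[OF fin zV] zn)
    next
      case 2
      then have vV: "v \<in> V" "0 \<le> v n" and uV: "u \<in> V" "u n < 0" by (auto simp: P_def Ng_def)
      have vu: "v \<noteq> u" using vV uV by auto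
      have S: "(\<Sum>w\<in>V. (if w = v then - u n else if w = u then v n else 0) * g w) = (- u n) * g v + v n * g u" for g
        by (rule sum_delta2[OF fin vV(1) uV(1) vu])
      have S1: "(\<Sum>w\<in>V. (if w = v then - u n else if w = u then v n else 0)) = (- u n) + v n"
        using S[of "\<lambda>_. 1"] by simp
      show ?thesis
        apply (intro exI[of _ "\<lambda>w. if w = v then - u n else if w = u then v n else 0"])
        using vV uV by (auto simp: S S1 2 comb_def)
    qed
  qed
  then obtain C where C: "\<forall>z\<in>V'. (\<forall>v\<in>V. 0 \<le> C z v) \<and> 0 < (\<Sum>v\<in>V. C z v) \<and>
       (\<forall>k<n. z k = (\<Sum>v\<in>V. C z v * v k)) \<and> 0 \<le> (\<Sum>v\<in>V. C z v * v n)"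
    using bchoice[OF rep] by blast
  define c where "c v = (\<Sum>z\<in>V'. c' z * C z v)" for v
  have swap: "(\<Sum>v\<in>V. c v * g v) = (\<Sum>z\<in>V'. c' z * (\<Sum>v\<in>V. C z v * g v))" for g :: "(nat \<Rightarrow> real) \<Rightarrow> real"
    unfolding c_def by (simp add: sum_distrib_left sum_distrib_right sum.swap[of _ V] mult.assoc)
  show ?case
  proof (intro exI[of _ c] conjI)
    show "\<forall>v\<in>V. 0 \<le> c v" using c'0 C by (auto simp: c_def intro!: sum_nonneg)
    obtain z0 where z0: "z0 \<in> V'" "0 < c' z0" using pos_sum_exists[OF finV' c'0 c'pos] by blast
    have "(\<Sum>v\<in>V. c v) = (\<Sum>z\<in>V'. c' z * (\<Sum>v\<in>V. C z v))" using swap[of "\<lambda>_. 1"] by simp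
    also have "\<dots> > 0"
    proof -
      have "c' z0 * (\<Sum>v\<in>V. C z0 v) \<le> (\<Sum>z\<in>V'. c' z * (\<Sum>v\<in>V. C z v))"
        by (rule member_le_sum[OF z0(1) _ finV']) (metis C c'0 DiffD1 less_imp_le mult_nonneg_nonneg)
      moreover have "0 < c' z0 * (\<Sum>v\<in>V. C z0 v)" using z0 C by auto
      ultimately show ?thesis by linarith
    qed
    finally show "0 < (\<Sum>v\<in>V. c v)" .
    show "\<forall>k<Suc n. 0 \<le> (\<Sum>v\<in>V. c v * v k)"
    proof (intro allI impI)
      fix k assume "k < Suc n"
      then consider "k < n" | "k = n" by linarith
      then show "0 \<le> (\<Sum>v\<in>V. c v * v k)"
      proof cases
        case 1
        have "(\<Sum>v\<in>V. c v * v k) = (\<Sum>z\<in>V'. c' z * z k)"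
          unfolding swap[of "\<lambda>v. v k"] using C 1 by (intro sum.cong) auto
        then show ?thesis using c'k 1 by simp
      next
        case 2
        have "(\<Sum>v\<in>V. c v * v k) = (\<Sum>z\<in>V'. c' z * (\<Sum>v\<in>V. C z v * v n))"
          using swap[of "\<lambda>v. v n"] 2 by simp
        also have "\<dots> \<ge> 0" by (rule sum_nonneg) (metis C c'0 mult_nonneg_nonneg)
        finally show ?thesis .
      qed
    qed
  qed
qed
lemma split_sum:
  fixes f :: "nat \<Rightarrow> real"
  assumes "a \<le> b"
  shows "(\<Sum>i<b. f i) = (\<Sum>i<a. f i) + (\<Sum>i\<in>{a..<b}. f i)"
proof -
  have eq: "{..<b} = {..<a} \<union> {a..<b}" using assms by auto
  have "(\<Sum>i<b. f i) = sum f ({..<a} \<union> {a..<b})" by (subst eq) simp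
  also have "\<dots> = (\<Sum>i<a. f i) + (\<Sum>i\<in>{a..<b}. f i)" by (rule sum.union_disjoint) auto
  finally show ?thesis .
qed

lemma weighted_le:
  fixes p w :: "nat \<Rightarrow> real"
  assumes mono: "nonincreasing n p" and w: "\<forall>j<n. 0 \<le> w j \<and> w j \<le> 1"
    and ws: "(\<Sum>j<n. w j) = real k" and kn: "k \<le> n"
  shows "(\<Sum>j<n. w j * p j) \<le> (\<Sum>j<k. p j)"
proof (cases "k = 0")
  case True
  then have "\<forall>j\<in>{..<n}. w j = 0" using ws w sum_nonneg_eq_0_iff[of "{..<n}" w] by auto
  then show ?thesis using True by simp
next
  case False
  define c where "c = p (k - 1)"
  have pc1: "\<forall>j<k. c \<le> p j" using mono kn False by (auto simp: nonincreasing_def c_def)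
  have pc2: "\<forall>j\<in>{k..<n}. p j \<le> c" using mono kn False by (auto simp: nonincreasing_def c_def)
  have "(\<Sum>j<n. w j * p j) = (\<Sum>j<k. w j * p j) + (\<Sum>j\<in>{k..<n}. w j * p j)"
    by (rule split_sum[OF kn])
  also have "\<dots> \<le> (\<Sum>j<k. p j + (w j - 1) * c) + (\<Sum>j\<in>{k..<n}. w j * c)"
  proof (rule add_mono; rule sum_mono)
    fix j assume j: "j \<in> {..<k}"
    have "(w j - 1) * p j \<le> (w j - 1) * c"
      using pc1 j w kn by (intro mult_left_mono_neg) auto
    then show "w j * p j \<le> p j + (w j - 1) * c" by (simp add: algebra_simps)
  next
    fix j assume j: "j \<in> {k..<n}"
    show "w j * p j \<le> w j * c" using pc2 j w by (intro mult_left_mono) auto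
  qed
  also have "\<dots> = (\<Sum>j<k. p j) + c * ((\<Sum>j<k. w j) + (\<Sum>j\<in>{k..<n}. w j) - real k)"
    by (simp add: sum.distrib sum_distrib_left sum_distrib_right algebra_simps sum_subtractf)
  also have "(\<Sum>j<k. w j) + (\<Sum>j\<in>{k..<n}. w j) = (\<Sum>j<n. w j)"
    by (rule split_sum[OF kn, symmetric])
  finally show ?thesis using ws by simp
qed

lemma kyfan_sorted:
  assumes "nonincreasing n p" "k \<le> n"
  shows "kyfan n p k = (\<Sum>i<k. p i)"
proof -
  let ?S = "{(\<Sum>i\<in>I. p i) | I. I \<subseteq> {..<n} \<and> card I = k}"
  have eq: "?S = (\<lambda>I. \<Sum>i\<in>I. p i) ` {I. I \<subseteq> {..<n} \<and> card I = k}" by auto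
  have "finite {I. I \<subseteq> {..<n} \<and> card I = k}"
    by (rule finite_subset[of _ "Pow {..<n}"]) auto
  then have fin: "finite ?S" unfolding eq by simp
  have mem: "(\<Sum>i<k. p i) \<in> ?S" using assms(2) by (intro CollectI exI[of _ "{..<k}"]) auto
  have le: "y \<le> (\<Sum>i<k. p i)" if "y \<in> ?S" for y
  proof -
    obtain I where I: "I \<subseteq> {..<n}" "card I = k" "y = (\<Sum>i\<in>I. p i)" using \<open>y \<in> ?S\<close> by auto
    have "(\<Sum>j<n. (if j \<in> I then 1 else 0) * p j) = (\<Sum>j<n. (if j \<in> I then p j else 0))"
      by (rule sum.cong) auto
    also have "\<dots> = sum p ({..<n} \<inter> I)" by (simp add: sum.inter_restrict)
    also have "\<dots> = y" using I by (simp add: Int_absorb1)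
    finally have "y = (\<Sum>j<n. (if j \<in> I then 1 else 0) * p j)" by simp
    also have "\<dots> \<le> (\<Sum>i<k. p i)"
    proof (rule weighted_le[OF assms(1) _ _ assms(2)])
      show "\<forall>j<n. 0 \<le> (if j \<in> I then 1 else (0::real)) \<and> (if j \<in> I then 1 else (0::real)) \<le> 1" by auto
      show "(\<Sum>j<n. if j \<in> I then 1 else (0::real)) = real k"
        using I by (simp add: sum.If_cases Int_absorb1)
    qed
    finally show ?thesis .
  qed
  show ?thesis unfolding kyfan_def
    by (rule Max_eqI[OF fin]) (use le mem in auto)
qed

lemma Qpos:
  assumes "prob_vec n q" "nonincreasing n q" "k < n"
  shows "0 < (\<Sum>i<Suc k. q i)"
proof -
  have q0: "0 < q 0"
  proof (rule ccontr)
    assume "\<not> 0 < q 0"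
    then have "\<forall>i\<in>{..<n}. q i \<le> 0" using assms(2) by (force simp: nonincreasing_def)
    then have "(\<Sum>i<n. q i) \<le> 0" by (metis sum_nonpos)
    then show False using assms(1) by (simp add: prob_vec_def)
  qed
  have "q 0 \<le> (\<Sum>i<Suc k. q i)"
    by (rule member_le_sum) (use assms in \<open>auto simp: prob_vec_def\<close>)
  then show ?thesis using q0 by simp
qed

lemma abel_aux:
  fixes s d :: "nat \<Rightarrow> real"
  assumes "nonincreasing n s" "\<forall>t\<le>n. 0 \<le> (\<Sum>i<t. d i)"
  shows "Suc t \<le> n \<Longrightarrow> s t * (\<Sum>i<Suc t. d i) \<le> (\<Sum>i<Suc t. s i * d i)"
proof (induction t)
  case 0 then show ?case by simp
next
  case (Suc t)
  have IH: "s t * (\<Sum>i<Suc t. d i) \<le> (\<Sum>i<Suc t. s i * d i)" using Suc by simp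
  have "s (Suc t) \<le> s t" using assms(1) Suc.prems by (simp add: nonincreasing_def)
  moreover have "0 \<le> (\<Sum>i<Suc t. d i)" using assms(2) Suc.prems by (metis Suc_leD)
  ultimately have "s (Suc t) * (\<Sum>i<Suc t. d i) \<le> s t * (\<Sum>i<Suc t. d i)"
    by (rule mult_right_mono)
  then show ?case using IH by (simp add: algebra_simps)
qed

lemma abel:
  fixes s d :: "nat \<Rightarrow> real"
  assumes "nonincreasing n s" "\<forall>i<n. 0 \<le> s i" "\<forall>t\<le>n. 0 \<le> (\<Sum>i<t. d i)"
  shows "0 \<le> (\<Sum>i<n. s i * d i)"
proof (cases n)
  case 0 then show ?thesis by simp
next
  case (Suc n')
  have "s n' * (\<Sum>i<Suc n'. d i) \<le> (\<Sum>i<Suc n'. s i * d i)"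
    using abel_aux[OF assms(1,3)] Suc by simp
  moreover have "0 \<le> s n' * (\<Sum>i<Suc n'. d i)" using assms Suc by (metis le_refl lessI mult_nonneg_nonneg)
  ultimately show ?thesis using Suc by simp
qed

lemma abel_identity:
  fixes a p :: "nat \<Rightarrow> real"
  shows "(\<Sum>y<n. (\<Sum>k\<in>{y..<n}. a k) * p y) = (\<Sum>k<n. a k * (\<Sum>y<Suc k. p y))"
proof (induction n)
  case 0 then show ?case by simp
next
  case (Suc n)
  have "(\<Sum>y<Suc n. (\<Sum>k\<in>{y..<Suc n}. a k) * p y) = (\<Sum>y<Suc n. (\<Sum>k\<in>{y..<n}. a k) * p y + a n * p y)"
    by (rule sum.cong) (auto simp: algebra_simps)
  also have "\<dots> = (\<Sum>y<n. (\<Sum>k\<in>{y..<n}. a k) * p y) + a n * (\<Sum>y<Suc n. p y)"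
    by (simp add: sum.distrib sum_distrib_left distrib_left)
  finally show ?case using Suc.IH by simp
qed
lemma sum_delta2':
  fixes \<alpha> \<beta> :: real
  assumes "finite A" "v \<in> A" "u \<in> A" "v \<noteq> u"
  shows "(\<Sum>w\<in>A. (if w = v then \<alpha> else if w = u then \<beta> else 0)) = \<alpha> + \<beta>"
  using sum_delta2[OF assms, of \<alpha> \<beta> "\<lambda>_. 1"] by simp

lemma ds_id: "doubly_stochastic n (\<lambda>i j. if i = j then 1 else 0)"
  by (simp add: doubly_stochastic_def)

lemma ds_prod:
  assumes "doubly_stochastic n A" "doubly_stochastic n B"
  shows "doubly_stochastic n (\<lambda>i j. \<Sum>l<n. A i l * B l j)"
proof -
  have col: "(\<Sum>i<n. \<Sum>l<n. A i l * B l j) = 1" if "j < n" for j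
  proof -
    have "(\<Sum>i<n. \<Sum>l<n. A i l * B l j) = (\<Sum>l<n. \<Sum>i<n. A i l * B l j)"
      by (rule sum.swap)
    also have "\<dots> = (\<Sum>l<n. (\<Sum>i<n. A i l) * B l j)"
      by (simp add: sum_distrib_right)
    also have "\<dots> = (\<Sum>l<n. B l j)" using assms(1) by (simp add: doubly_stochastic_def)
    finally show ?thesis using assms(2) that by (simp add: doubly_stochastic_def)
  qed
  have row: "(\<Sum>j<n. \<Sum>l<n. A i l * B l j) = 1" if "i < n" for i
  proof -
    have "(\<Sum>j<n. \<Sum>l<n. A i l * B l j) = (\<Sum>l<n. \<Sum>j<n. A i l * B l j)"
      by (rule sum.swap)
    also have "\<dots> = (\<Sum>l<n. A i l * (\<Sum>j<n. B l j))"
      by (simp add: sum_distrib_left)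
    also have "\<dots> = (\<Sum>l<n. A i l)" using assms(2) by (simp add: doubly_stochastic_def)
    finally show ?thesis using assms(1) that by (simp add: doubly_stochastic_def)
  qed
  show ?thesis using assms col row
    by (auto simp: doubly_stochastic_def intro!: sum_nonneg mult_nonneg_nonneg)
qed

lemma hlp:
  fixes r q :: "nat \<Rightarrow> real"
  shows "card {i. i < n \<and> r i \<noteq> q i} = d \<Longrightarrow> nonincreasing n r \<Longrightarrow> nonincreasing n q \<Longrightarrow>
    (\<forall>t\<le>n. (\<Sum>i<t. q i) \<le> (\<Sum>i<t. r i)) \<Longrightarrow> (\<Sum>i<n. q i) = (\<Sum>i<n. r i) \<Longrightarrow>
    \<exists>D. doubly_stochastic n D \<and> (\<forall>i<n. q i = (\<Sum>j<n. D i j * r j))"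
proof (induction d arbitrary: r rule: less_induct)
  case (less d)
  note card_d = less.prems(1) and rmono = less.prems(2) and qmono = less.prems(3)
    and maj = less.prems(4) and tot = less.prems(5)
  have rm: "r b \<le> r a" if "a \<le> b" "b < n" for a b using rmono that by (simp add: nonincreasing_def)
  have qm: "q b \<le> q a" if "a \<le> b" "b < n" for a b using qmono that by (simp add: nonincreasing_def)
  show ?case
  proof (cases "\<forall>i<n. r i = q i")
    case True
    have "q i = (\<Sum>j<n. (if i = j then 1 else 0) * r j)" if "i < n" for i
    proof -
      have "(\<Sum>j<n. (if i = j then 1 else 0) * r j) = (\<Sum>j<n. (if j = i then 1 else 0) * r j)"
        by (intro sum.cong) auto
      also have "\<dots> = r i" using that by (intro sum_delta1) auto
      finally show ?thesis using True that by simp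
    qed
    then show ?thesis
      by (intro exI[of _ "\<lambda>i j. if i = j then 1 else 0"] conjI ds_id) auto
  next
    case False
    then have ex: "\<exists>i. i < n \<and> r i \<noteq> q i" by auto
    define j0 where "j0 = (LEAST i. i < n \<and> r i \<noteq> q i)"
    have j0: "j0 < n" "r j0 \<noteq> q j0" using LeastI_ex[OF ex] by (auto simp: j0_def)
    have before: "r i = q i" if "i < j0" for i
      using not_less_Least[of i "\<lambda>i. i < n \<and> r i \<noteq> q i"] that j0(1) by (auto simp: j0_def)
    have eqj0: "(\<Sum>i<j0. q i) = (\<Sum>i<j0. r i)" using before by (intro sum.cong) auto
    have "(\<Sum>i<Suc j0. q i) \<le> (\<Sum>i<Suc j0. r i)" using maj j0(1) by (metis Suc_leI)
    then have rj0: "q j0 < r j0" using eqj0 j0(2) by simp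
    have ex2: "\<exists>i. j0 < i \<and> i < n \<and> r i < q i"
    proof (rule ccontr)
      assume "\<not> ?thesis"
      then have ge: "\<forall>i\<in>{Suc j0..<n}. q i \<le> r i" by auto
      have "(\<Sum>i<n. q i) = (\<Sum>i<Suc j0. q i) + (\<Sum>i\<in>{Suc j0..<n}. q i)"
        using j0(1) by (intro split_sum) simp
      also have "\<dots> < (\<Sum>i<Suc j0. r i) + (\<Sum>i\<in>{Suc j0..<n}. r i)"
        using eqj0 rj0 sum_mono[of "{Suc j0..<n}" q r] ge by simp
      also have "\<dots> = (\<Sum>i<n. r i)"
        using j0(1) by (intro split_sum[symmetric]) simp
      finally show False using tot by simp
    qed
    define k where "k = (LEAST i. j0 < i \<and> i < n \<and> r i < q i)"
    have k: "j0 < k" "k < n" "r k < q k" using LeastI_ex[OF ex2] by (auto simp: k_def)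
    have k_min: "k \<le> i" if "j0 < i" "i < n" "r i < q i" for i
      using Least_le[of "\<lambda>i. j0 < i \<and> i < n \<and> r i < q i" i] that by (simp add: k_def)
    define j where "j = (GREATEST i. i < k \<and> q i < r i)"
    have Pj0: "j0 < k \<and> q j0 < r j0" using k rj0 by simp
    have j: "j < k" "q j < r j"
      using GreatestI_nat[of "\<lambda>i. i < k \<and> q i < r i" j0 k] Pj0 by (auto simp: j_def)
    have j0j: "j0 \<le> j"
      using Greatest_le_nat[of "\<lambda>i. i < k \<and> q i < r i" j0 k] Pj0 by (auto simp: j_def)
    have j_max: "i \<le> j" if "i < k" "q i < r i" for i
      using Greatest_le_nat[of "\<lambda>i. i < k \<and> q i < r i" i k] that by (auto simp: j_def)
    have between: "r i = q i" if "j < i" "i < k" for i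
    proof -
      have "\<not> q i < r i" using j_max that by force
      moreover have "\<not> r i < q i" using k_min[of i] that j0j k(2) by force
      ultimately show ?thesis by simp
    qed
    have jn: "j < n" using j k by simp
    have jk: "j \<noteq> k" using j by simp
    define \<delta> where "\<delta> = min (r j - q j) (q k - r k)"
    have \<delta>pos: "0 < \<delta>" using j k by (simp add: \<delta>_def)
    have \<delta>1: "\<delta> \<le> r j - q j" and \<delta>2: "\<delta> \<le> q k - r k" by (simp_all add: \<delta>_def)
    have qjk: "q k \<le> q j" using qm[of j k] j k by simp
    have rjk: "r k < r j" using qjk j k by simp
    define lam where "lam = \<delta> / (r j - r k)"
    have lam0: "0 < lam" using \<delta>pos rjk by (simp add: lam_def)
    have lam1: "lam \<le> 1" using \<delta>1 qjk k(3) rjk by (simp add: lam_def field_simps)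
    have lamd: "lam * (r j - r k) = \<delta>" using rjk by (simp add: lam_def)
    define r' where "r' = (\<lambda>i. if i = j then r j - \<delta> else if i = k then r k + \<delta> else r i)"
    have r'_alt: "r' i = r i + ((if i = k then \<delta> else 0) - (if i = j then \<delta> else 0))" for i
      using jk by (simp add: r'_def)
    have r'sum: "(\<Sum>i<t. r' i) = (\<Sum>i<t. r i) + ((if k < t then \<delta> else 0) - (if j < t then \<delta> else 0))" for t
      unfolding r'_alt by (simp add: sum.distrib sum_subtractf)
    have mono': "nonincreasing n r'"
      unfolding nonincreasing_def
    proof (intro allI impI)
      fix a b assume ab: "a \<le> b" "b < n"
      show "r' b \<le> r' a"
      proof (cases "a = b")
        case True then show ?thesis by simp
      next
        case False
        then have ab': "a < b" using ab by simp
        consider "b = j" | "b = k" | "b \<noteq> j" "b \<noteq> k" by blast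
        then show ?thesis
        proof cases
          case 1
          then have "a \<noteq> k" "a \<noteq> j" using ab' j by auto
          then show ?thesis using 1 rm[of a j] ab' jn \<delta>pos by (simp add: r'_def)
        next
          case 2
          consider "a = j" | "a < j" | "j < a" "a \<noteq> j" using ab' by linarith
          then show ?thesis
          proof cases
            case 1 then show ?thesis using 2 jk \<delta>1 \<delta>2 qjk by (simp add: r'_def)
          next
            case a: 2
            have "r j \<le> r a" using rm[of a j] a jn by simp
            then show ?thesis using a 2 jk \<delta>1 \<delta>2 qjk \<delta>pos ab' by (simp add: r'_def)
          next
            case a: 3
            have "r a = q a" using between[of a] a ab' 2 by simp
            moreover have "q k \<le> q a" using qm[of a k] ab' 2 k by simp
            ultimately show ?thesis using a 2 ab' \<delta>2 by (simp add: r'_def)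
          qed
        next
          case 3
          consider "a = j" | "a = k" | "a \<noteq> j" "a \<noteq> k" by blast
          then show ?thesis
          proof cases
            case a: 1
            show ?thesis
            proof (cases "b < k")
              case True
              have "r b = q b" using between[of b] True ab' a by simp
              moreover have "q b \<le> q j" using qm[of j b] ab' a ab by simp
              ultimately show ?thesis using a 3 \<delta>1 by (simp add: r'_def)
            next
              case False
              then have "k < b" using 3 by simp
              then have "r b \<le> r k" using rm[of k b] ab by simp
              then show ?thesis using a 3 \<delta>1 \<delta>2 qjk k(3) by (simp add: r'_def)
            qed
          next
            case a: 2
            then have "r b \<le> r k" using rm[of k b] ab by simp
            then show ?thesis using a 3 jk \<delta>pos by (simp add: r'_def)
          next
            case a: 3
            then show ?thesis using 3 rm[of a b] ab by (simp add: r'_def)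
          qed
        qed
      qed
    qed
    have maj': "\<forall>t\<le>n. (\<Sum>i<t. q i) \<le> (\<Sum>i<t. r' i)"
    proof (intro allI impI)
      fix t assume tn: "t \<le> n"
      consider "t \<le> j" | "k < t" | "j < t" "t \<le> k" by linarith
      then show "(\<Sum>i<t. q i) \<le> (\<Sum>i<t. r' i)"
      proof cases
        case 1 then show ?thesis using maj tn j by (simp add: r'sum)
      next
        case 2 then show ?thesis using maj tn j by (simp add: r'sum)
      next
        case 3
        have sr: "(\<Sum>i<t. r i) = (\<Sum>i<j. r i) + r j + (\<Sum>i\<in>{Suc j..<t}. r i)"
          using split_sum[of "Suc j" t r] 3 by simp
        have sq: "(\<Sum>i<t. q i) = (\<Sum>i<j. q i) + q j + (\<Sum>i\<in>{Suc j..<t}. q i)"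
          using split_sum[of "Suc j" t q] 3 by simp
        have mid: "(\<Sum>i\<in>{Suc j..<t}. r i) = (\<Sum>i\<in>{Suc j..<t}. q i)"
          using between 3 by (intro sum.cong) auto
        have "(\<Sum>i<j. q i) \<le> (\<Sum>i<j. r i)" using maj jn by simp
        then show ?thesis using 3 sr sq mid \<delta>1 by (simp add: r'sum)
      qed
    qed
    have tot': "(\<Sum>i<n. q i) = (\<Sum>i<n. r' i)" using tot jn k(2) by (simp add: r'sum)
    have sub: "{i. i < n \<and> r' i \<noteq> q i} \<subset> {i. i < n \<and> r i \<noteq> q i}"
    proof
      show "{i. i < n \<and> r' i \<noteq> q i} \<subseteq> {i. i < n \<and> r i \<noteq> q i}"
        using j k by (auto simp: r'_def)
      have "r' j = q j \<or> r' k = q k" using jk by (auto simp: r'_def \<delta>_def min_def)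
      then show "{i. i < n \<and> r' i \<noteq> q i} \<noteq> {i. i < n \<and> r i \<noteq> q i}"
      proof
        assume h: "r' j = q j"
        have "j \<notin> {i. i < n \<and> r' i \<noteq> q i}" using h by simp
        moreover have "j \<in> {i. i < n \<and> r i \<noteq> q i}" using j jn by simp
        ultimately show ?thesis by blast
      next
        assume h: "r' k = q k"
        have "k \<notin> {i. i < n \<and> r' i \<noteq> q i}" using h by simp
        moreover have "k \<in> {i. i < n \<and> r i \<noteq> q i}" using k by simp
        ultimately show ?thesis by blast
      qed
    qed
    have "card {i. i < n \<and> r' i \<noteq> q i} < d"
      using psubset_card_mono[OF _ sub] card_d by simp
    then obtain D' where D': "doubly_stochastic n D'" "\<forall>i<n. q i = (\<Sum>l<n. D' i l * r' l)"
      using less.IH[OF _ refl mono' qmono maj' tot'] by blast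
    define T where "T = (\<lambda>a b. if a = j then (if b = j then 1 - lam else if b = k then lam else 0)
        else if a = k then (if b = j then lam else if b = k then 1 - lam else 0)
        else (if b = a then 1 else (0::real)))"
    have Tds: "doubly_stochastic n T"
    proof -
      have nn: "\<forall>a<n. \<forall>b<n. 0 \<le> T a b" using lam0 lam1 by (simp add: T_def)
      have rows: "(\<Sum>b<n. T a b) = 1" if "a < n" for a
      proof -
        consider "a = j" | "a = k" | "a \<noteq> j" "a \<noteq> k" by blast
        then show ?thesis
        proof cases
          case 1 then show ?thesis using sum_delta2'[of "{..<n}" j k] jn k(2) jk by (simp add: T_def)
        next
          case 2 then show ?thesis using sum_delta2'[of "{..<n}" j k] jn k(2) jk by (simp add: T_def)
        next
          case 3 then show ?thesis using that by (simp add: T_def)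
        qed
      qed
      have cols: "(\<Sum>a<n. T a b) = 1" if "b < n" for b
      proof -
        consider "b = j" | "b = k" | "b \<noteq> j" "b \<noteq> k" by blast
        then show ?thesis
        proof cases
          case 1
          have "(\<Sum>a<n. T a b) = (\<Sum>a<n. (if a = j then 1 - lam else if a = k then lam else 0))"
            using 1 by (intro sum.cong) (auto simp: T_def)
          then show ?thesis using sum_delta2'[of "{..<n}" j k] jn k(2) jk by simp
        next
          case 2
          have "(\<Sum>a<n. T a b) = (\<Sum>a<n. (if a = j then lam else if a = k then 1 - lam else 0))"
            using 2 jk by (intro sum.cong) (auto simp: T_def)
          then show ?thesis using sum_delta2'[of "{..<n}" j k] jn k(2) jk by simp
        next
          case 3
          have "(\<Sum>a<n. T a b) = (\<Sum>a<n. (if a = b then 1 else 0))"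
            using 3 by (intro sum.cong) (auto simp: T_def)
          then show ?thesis using that by simp
        qed
      qed
      show ?thesis using nn rows cols by (simp add: doubly_stochastic_def)
    qed
    have Tr: "r' a = (\<Sum>b<n. T a b * r b)" if "a < n" for a
    proof -
      consider "a = j" | "a = k" | "a \<noteq> j" "a \<noteq> k" by blast
      then show ?thesis
      proof cases
        case 1
        have "(\<Sum>b<n. T a b * r b) = (1 - lam) * r j + lam * r k"
          using 1 sum_delta2[of "{..<n}" j k "1 - lam" lam r] jn k(2) jk by (simp add: T_def)
        also have "\<dots> = r j - lam * (r j - r k)" by (simp add: algebra_simps)
        finally show ?thesis using 1 lamd by (simp add: r'_def)
      next
        case 2
        have "(\<Sum>b<n. T a b * r b) = lam * r j + (1 - lam) * r k"
          using 2 jk sum_delta2[of "{..<n}" j k lam "1 - lam" r] jn k(2) by (simp add: T_def)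
        also have "\<dots> = r k + lam * (r j - r k)" by (simp add: algebra_simps)
        finally show ?thesis using 2 jk lamd by (simp add: r'_def)
      next
        case 3
        have "(\<Sum>b<n. T a b * r b) = (\<Sum>b<n. (if b = a then r b else 0))"
          using 3 by (intro sum.cong) (auto simp: T_def)
        then show ?thesis using 3 that by (simp add: r'_def)
      qed
    qed
    show ?thesis
    proof (intro exI[of _ "\<lambda>i b. \<Sum>l<n. D' i l * T l b"] conjI allI impI)
      show "doubly_stochastic n (\<lambda>i b. \<Sum>l<n. D' i l * T l b)" by (rule ds_prod[OF D'(1) Tds])
      fix i assume i: "i < n"
      have "q i = (\<Sum>l<n. D' i l * (\<Sum>b<n. T l b * r b))"
        using D'(2) i Tr by simp
      also have "\<dots> = (\<Sum>l<n. \<Sum>b<n. D' i l * T l b * r b)"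
        by (simp add: sum_distrib_left mult.assoc)
      also have "\<dots> = (\<Sum>b<n. \<Sum>l<n. D' i l * T l b * r b)"
        by (rule sum.swap)
      also have "\<dots> = (\<Sum>b<n. (\<Sum>l<n. D' i l * T l b) * r b)"
        by (simp add: sum_distrib_right)
      finally show "q i = (\<Sum>b<n. (\<Sum>l<n. D' i l * T l b) * r b)" .
    qed
  qed
qed
lemma comb_mono:
  fixes F :: "nat \<Rightarrow> nat \<Rightarrow> real"
  assumes "\<forall>x<m. nonincreasing n (\<lambda>y. F y x)" "\<forall>x<m. 0 \<le> c x"
  shows "nonincreasing n (\<lambda>y. if y < n then (\<Sum>x<m. c x * F y x) else 0)"
    and "nonincreasing n (\<lambda>y. (\<Sum>x<m. c x * F y x))"
proof -
  have *: "(\<Sum>x<m. c x * F b x) \<le> (\<Sum>x<m. c x * F a x)" if "a \<le> b" "b < n" for a b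
    using assms that by (intro sum_mono mult_left_mono) (auto simp: nonincreasing_def)
  show "nonincreasing n (\<lambda>y. if y < n then (\<Sum>x<m. c x * F y x) else 0)"
    using * by (auto simp: nonincreasing_def)
  show "nonincreasing n (\<lambda>y. (\<Sum>x<m. c x * F y x))"
    using * by (auto simp: nonincreasing_def)
qed

lemma maj_sorted:
  assumes "nonincreasing n p" "nonincreasing n q"
  shows "majorizes n p q \<longleftrightarrow> (\<forall>t\<le>n. (\<Sum>i<t. q i) \<le> (\<Sum>i<t. p i))"
proof
  assume "majorizes n p q"
  then show "\<forall>t\<le>n. (\<Sum>i<t. q i) \<le> (\<Sum>i<t. p i)"
  proof (intro allI impI)
    fix t assume t: "t \<le> n"
    show "(\<Sum>i<t. q i) \<le> (\<Sum>i<t. p i)"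
    proof (cases "t = 0")
      case True then show ?thesis by simp
    next
      case False
      then have "kyfan n q t \<le> kyfan n p t" using \<open>majorizes n p q\<close> t by (simp add: majorizes_def)
      then show ?thesis using kyfan_sorted[OF assms(1) t] kyfan_sorted[OF assms(2) t] by simp
    qed
  qed
next
  assume "\<forall>t\<le>n. (\<Sum>i<t. q i) \<le> (\<Sum>i<t. p i)"
  then show "majorizes n p q"
    unfolding majorizes_def using kyfan_sorted[OF assms(1)] kyfan_sorted[OF assms(2)] by auto
qed

lemma dsum:
  assumes "doubly_stochastic n D" "nonincreasing n p" "t \<le> n"
  shows "(\<Sum>y<t. \<Sum>y0<n. D y y0 * p y0) \<le> (\<Sum>y0<t. p y0)"
proof -
  have "(\<Sum>y<t. \<Sum>y0<n. D y y0 * p y0) = (\<Sum>y0<n. \<Sum>y<t. D y y0 * p y0)" by (rule sum.swap)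
  also have "\<dots> = (\<Sum>y0<n. (\<Sum>y<t. D y y0) * p y0)" by (simp add: sum_distrib_right)
  also have "\<dots> \<le> (\<Sum>y0<t. p y0)"
  proof (rule weighted_le[OF assms(2) _ _ assms(3)])
    show "\<forall>j<n. 0 \<le> (\<Sum>y<t. D y j) \<and> (\<Sum>y<t. D y j) \<le> 1"
    proof (intro allI impI conjI)
      fix j assume j: "j < n"
      show "0 \<le> (\<Sum>y<t. D y j)" using assms(1,3) j by (auto simp: doubly_stochastic_def intro!: sum_nonneg)
      have "(\<Sum>y<t. D y j) \<le> (\<Sum>y<n. D y j)"
        using assms(1,3) j by (intro sum_mono2) (auto simp: doubly_stochastic_def)
      then show "(\<Sum>y<t. D y j) \<le> 1" using assms(1) j by (simp add: doubly_stochastic_def)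
    qed
    have "(\<Sum>j<n. \<Sum>y<t. D y j) = (\<Sum>y<t. \<Sum>j<n. D y j)" by (rule sum.swap)
    also have "\<dots> = (\<Sum>y<t. 1)" using assms(1,3) by (intro sum.cong) (auto simp: doubly_stochastic_def)
    finally show "(\<Sum>j<n. \<Sum>y<t. D y j) = real t" by simp
  qed
  finally show ?thesis .
qed

lemma one_two:
  assumes cm: "channel_majorizes n m N m' M"
    and nN: "\<forall>x<m. nonincreasing n (\<lambda>y. N y x)" and nM: "\<forall>w<m'. nonincreasing n (\<lambda>y. M y w)"
  shows "set_majorizes n (conv_channel n m N) (conv_channel n m' M)"
proof -
  obtain l :: nat and S :: "nat \<Rightarrow> nat \<Rightarrow> nat \<Rightarrow> real" and D :: "nat \<Rightarrow> nat \<Rightarrow> nat \<Rightarrow> real" where S: "\<forall>w<m'. (\<forall>x<m. \<forall>z<l. 0 \<le> S x z w) \<and> (\<Sum>x<m. \<Sum>z<l. S x z w) = 1"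
    and D: "\<forall>z<l. doubly_stochastic n (D z)"
    and MD: "\<forall>w<m'. \<forall>y'<n. M y' w = (\<Sum>x<m. \<Sum>z<l. S x z w * (\<Sum>y<n. D z y' y * N y x))"
    using cm unfolding channel_majorizes_def by blast
  have colM: "(\<Sum>y<t. M y w) \<le> (\<Sum>x<m. (\<Sum>z<l. S x z w) * (\<Sum>y<t. N y x))" if w: "w < m'" and t: "t \<le> n" for w t
  proof -
    have "(\<Sum>y<t. M y w) = (\<Sum>y<t. \<Sum>x<m. \<Sum>z<l. S x z w * (\<Sum>y0<n. D z y y0 * N y0 x))"
      using MD w t by (intro sum.cong) auto
    also have "\<dots> = (\<Sum>x<m. \<Sum>y<t. \<Sum>z<l. S x z w * (\<Sum>y0<n. D z y y0 * N y0 x))" by (rule sum.swap)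
    also have "\<dots> = (\<Sum>x<m. \<Sum>z<l. \<Sum>y<t. S x z w * (\<Sum>y0<n. D z y y0 * N y0 x))"
      by (intro sum.cong refl sum.swap)
    also have "\<dots> = (\<Sum>x<m. \<Sum>z<l. S x z w * (\<Sum>y<t. \<Sum>y0<n. D z y y0 * N y0 x))"
      by (simp add: sum_distrib_left)
    also have "\<dots> \<le> (\<Sum>x<m. \<Sum>z<l. S x z w * (\<Sum>y0<t. N y0 x))"
    proof -
      have hz: "(\<Sum>y<t. \<Sum>y0<n. D z y y0 * N y0 x) \<le> (\<Sum>y0<t. N y0 x)" if "x < m" "z < l" for x z
        using dsum[of n "D z" "\<lambda>y. N y x" t] D that nN t by auto
      have hS: "0 \<le> S x z w" if "x < m" "z < l" for x z using S w that by auto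
      show ?thesis
      proof (rule sum_mono)
        fix x assume x: "x \<in> {..<m}"
        show "(\<Sum>z<l. S x z w * (\<Sum>y<t. \<Sum>y0<n. D z y y0 * N y0 x)) \<le> (\<Sum>z<l. S x z w * (\<Sum>y0<t. N y0 x))"
        proof (rule sum_mono)
          fix z assume z: "z \<in> {..<l}"
          show "S x z w * (\<Sum>y<t. \<Sum>y0<n. D z y y0 * N y0 x) \<le> S x z w * (\<Sum>y0<t. N y0 x)"
            using hz[of x z] hS[of x z] x z by (intro mult_left_mono) auto
        qed
      qed
    qed
    also have "\<dots> = (\<Sum>x<m. (\<Sum>z<l. S x z w) * (\<Sum>y<t. N y x))" by (simp add: sum_distrib_right)
    finally show ?thesis .
  qed
  show ?thesis unfolding set_majorizes_def
  proof
    fix q assume "q \<in> conv_channel n m' M"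
    then obtain c where c: "prob_vec m' c" and q: "q = (\<lambda>y. if y < n then (\<Sum>w<m'. c w * M y w) else 0)"
      by (auto simp: conv_channel_def)
    define a where "a x = (\<Sum>w<m'. c w * (\<Sum>z<l. S x z w))" for x
    define p where "p = (\<lambda>y. if y < n then (\<Sum>x<m. a x * N y x) else 0)"
    have c0: "\<forall>w<m'. 0 \<le> c w" using c by (simp add: prob_vec_def)
    have a0: "\<forall>x<m. 0 \<le> a x" using c0 S by (auto simp: a_def intro!: sum_nonneg mult_nonneg_nonneg)
    have "(\<Sum>x<m. a x) = (\<Sum>w<m'. c w * (\<Sum>x<m. \<Sum>z<l. S x z w))"
      unfolding a_def by (simp add: sum_distrib_left sum.swap[of _ "{..<m}"])
    also have "\<dots> = (\<Sum>w<m'. c w)" using S by (intro sum.cong) auto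
    finally have asum: "(\<Sum>x<m. a x) = 1" using c by (simp add: prob_vec_def)
    have pin: "p \<in> conv_channel n m N"
      unfolding conv_channel_def p_def using a0 asum by (auto simp: prob_vec_def)
    have pmono: "nonincreasing n p" unfolding p_def by (rule comb_mono(1)[OF nN a0])
    have qmono: "nonincreasing n q" unfolding q by (rule comb_mono(1)[OF nM c0])
    have "\<forall>t\<le>n. (\<Sum>i<t. q i) \<le> (\<Sum>i<t. p i)"
    proof (intro allI impI)
      fix t assume t: "t \<le> n"
      have h1: "(\<Sum>i<t. q i) = (\<Sum>i<t. \<Sum>w<m'. c w * M i w)" unfolding q using t by (intro sum.cong) auto
      have h1': "(\<Sum>i<t. \<Sum>w<m'. c w * M i w) = (\<Sum>w<m'. c w * (\<Sum>i<t. M i w))"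
        by (simp add: sum_distrib_left sum.swap[of _ "{..<t}"])
      define P where "P x = (\<Sum>y<t. N y x)" for x
      have "(\<Sum>w<m'. c w * (\<Sum>i<t. M i w)) \<le> (\<Sum>w<m'. c w * (\<Sum>x<m. (\<Sum>z<l. S x z w) * P x))"
        using colM t c0 unfolding P_def by (intro sum_mono mult_left_mono) auto
      also have "\<dots> = (\<Sum>w<m'. \<Sum>x<m. c w * (\<Sum>z<l. S x z w) * P x)"
        by (simp add: sum_distrib_left sum_distrib_right mult.assoc)
      also have "\<dots> = (\<Sum>x<m. \<Sum>w<m'. c w * (\<Sum>z<l. S x z w) * P x)"
        by (rule sum.swap)
      also have "\<dots> = (\<Sum>x<m. a x * P x)"
        unfolding a_def by (simp only: sum_distrib_right)
      finally have h2: "(\<Sum>w<m'. c w * (\<Sum>i<t. M i w)) \<le> (\<Sum>x<m. a x * (\<Sum>y<t. N y x))"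
        unfolding P_def .
      have h3: "(\<Sum>x<m. a x * (\<Sum>y<t. N y x)) = (\<Sum>i<t. p i)" unfolding p_def using t
        by (simp add: sum_distrib_left sum.swap[of _ "{..<t}"])
      show "(\<Sum>i<t. q i) \<le> (\<Sum>i<t. p i)" using h1 h1' h2 h3 by linarith
    qed
    then have "majorizes n p q" using maj_sorted[OF pmono qmono] by simp
    then show "\<exists>p\<in>conv_channel n m N. majorizes n p q" using pin by blast
  qed
qed
lemma two_three:
  assumes sm: "set_majorizes n (conv_channel n m N) (conv_channel n m' M)"
    and nN: "\<forall>x<m. nonincreasing n (\<lambda>y. N y x)" and nM: "\<forall>w<m'. nonincreasing n (\<lambda>y. M y w)"
  shows "\<exists>S. col_stochastic m m' S \<and> (\<forall>w<m'. majorizes n (\<lambda>y. \<Sum>x<m. S x w * N y x) (\<lambda>y. M y w))"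
proof -
  have "\<forall>w\<in>{..<m'}. \<exists>c. prob_vec m c \<and> majorizes n (\<lambda>y. \<Sum>x<m. c x * N y x) (\<lambda>y. M y w)"
  proof
    fix w assume "w \<in> {..<m'}"
    then have w: "w < m'" by simp
    define e where "e = (\<lambda>w'. if w' = w then 1 else (0::real))"
    have e: "prob_vec m' e" using w by (simp add: prob_vec_def e_def)
    have qe: "(\<lambda>y. if y < n then (\<Sum>w'<m'. e w' * M y w') else 0) = (\<lambda>y. if y < n then M y w else 0)"
    proof
      fix y
      have "(\<Sum>w'<m'. e w' * M y w') = M y w" unfolding e_def by (rule sum_delta1) (use w in auto)
      then show "(if y < n then (\<Sum>w'<m'. e w' * M y w') else 0) = (if y < n then M y w else 0)" by simp
    qed
    have "(\<lambda>y. if y < n then M y w else 0) \<in> conv_channel n m' M"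
    proof -
      have "(\<lambda>y. if y < n then M y w else 0) = (\<lambda>y. if y < n then (\<Sum>w'<m'. e w' * M y w') else 0) \<and> prob_vec m' e"
        using e qe by simp
      then show ?thesis unfolding conv_channel_def by blast
    qed
    then obtain p where p: "p \<in> conv_channel n m N" "majorizes n p (\<lambda>y. if y < n then M y w else 0)"
      using sm by (auto simp: set_majorizes_def)
    then obtain c where c: "prob_vec m c" and pc: "p = (\<lambda>y. if y < n then (\<Sum>x<m. c x * N y x) else 0)"
      by (auto simp: conv_channel_def)
    have c0: "\<forall>x<m. 0 \<le> c x" using c by (simp add: prob_vec_def)
    have pmono: "nonincreasing n p" unfolding pc by (rule comb_mono(1)[OF nN c0])
    have qmono: "nonincreasing n (\<lambda>y. if y < n then M y w else 0)"
      using nM w by (simp add: nonincreasing_def)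
    have pre: "\<forall>t\<le>n. (\<Sum>i<t. (if i < n then M i w else 0)) \<le> (\<Sum>i<t. p i)"
      using maj_sorted[OF pmono qmono] p(2) by simp
    have "\<forall>t\<le>n. (\<Sum>i<t. M i w) \<le> (\<Sum>i<t. \<Sum>x<m. c x * N i x)"
    proof (intro allI impI)
      fix t assume t: "t \<le> n"
      have "(\<Sum>i<t. (if i < n then M i w else 0)) = (\<Sum>i<t. M i w)" using t by (intro sum.cong) auto
      moreover have "(\<Sum>i<t. p i) = (\<Sum>i<t. \<Sum>x<m. c x * N i x)" unfolding pc using t by (intro sum.cong) auto
      moreover have "(\<Sum>i<t. (if i < n then M i w else 0)) \<le> (\<Sum>i<t. p i)" using pre t by blast
      ultimately show "(\<Sum>i<t. M i w) \<le> (\<Sum>i<t. \<Sum>x<m. c x * N i x)" by linarith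
    qed
    then have "majorizes n (\<lambda>y. \<Sum>x<m. c x * N y x) (\<lambda>y. M y w)"
      using maj_sorted[OF comb_mono(2)[OF nN c0]] nM w by simp
    then show "\<exists>c. prob_vec m c \<and> majorizes n (\<lambda>y. \<Sum>x<m. c x * N y x) (\<lambda>y. M y w)" using c by blast
  qed
  from bchoice[OF this] obtain C where C: "\<forall>w\<in>{..<m'}. prob_vec m (C w) \<and> majorizes n (\<lambda>y. \<Sum>x<m. C w x * N y x) (\<lambda>y. M y w)"
    by blast
  show ?thesis
    by (intro exI[of _ "\<lambda>x w. C w x"]) (use C in \<open>auto simp: col_stochastic_def\<close>)
qed

lemma three_two:
  assumes S: "col_stochastic m m' S" and SM: "\<forall>w<m'. majorizes n (\<lambda>y. \<Sum>x<m. S x w * N y x) (\<lambda>y. M y w)"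
    and nN: "\<forall>x<m. nonincreasing n (\<lambda>y. N y x)" and nM: "\<forall>w<m'. nonincreasing n (\<lambda>y. M y w)"
  shows "set_majorizes n (conv_channel n m N) (conv_channel n m' M)"
  unfolding set_majorizes_def
proof
  fix q assume "q \<in> conv_channel n m' M"
  then obtain c where c: "prob_vec m' c" and q: "q = (\<lambda>y. if y < n then (\<Sum>w<m'. c w * M y w) else 0)"
    by (auto simp: conv_channel_def)
  have c0: "\<forall>w<m'. 0 \<le> c w" using c by (simp add: prob_vec_def)
  have S0: "\<forall>w<m'. \<forall>x<m. 0 \<le> S x w" and S1: "\<forall>w<m'. (\<Sum>x<m. S x w) = 1"
    using S by (auto simp: col_stochastic_def prob_vec_def)
  define a where "a x = (\<Sum>w<m'. c w * S x w)" for x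
  define p where "p = (\<lambda>y. if y < n then (\<Sum>x<m. a x * N y x) else 0)"
  have a0: "\<forall>x<m. 0 \<le> a x" using c0 S0 by (auto simp: a_def intro!: sum_nonneg)
  have "(\<Sum>x<m. a x) = (\<Sum>w<m'. \<Sum>x<m. c w * S x w)" unfolding a_def by (rule sum.swap)
  also have "\<dots> = (\<Sum>w<m'. c w)" using S1 by (intro sum.cong) (auto simp: sum_distrib_left[symmetric])
  finally have asum: "(\<Sum>x<m. a x) = 1" using c by (simp add: prob_vec_def)
  have pin: "p \<in> conv_channel n m N"
    unfolding conv_channel_def p_def using a0 asum by (auto simp: prob_vec_def)
  have pmono: "nonincreasing n p" unfolding p_def by (rule comb_mono(1)[OF nN a0])
  have qmono: "nonincreasing n q" unfolding q by (rule comb_mono(1)[OF nM c0])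
  have "\<forall>t\<le>n. (\<Sum>i<t. q i) \<le> (\<Sum>i<t. p i)"
  proof (intro allI impI)
    fix t assume t: "t \<le> n"
    define P where "P x = (\<Sum>y<t. N y x)" for x
    have rw: "(\<Sum>i<t. M i w) \<le> (\<Sum>x<m. S x w * P x)" if w: "w < m'" for w
    proof -
      have "nonincreasing n (\<lambda>y. \<Sum>x<m. S x w * N y x)" using comb_mono(2)[OF nN] S0 w by simp
      then have "(\<Sum>i<t. M i w) \<le> (\<Sum>i<t. \<Sum>x<m. S x w * N i x)"
        using maj_sorted[of n _ "\<lambda>y. M y w"] SM nM w t by auto
      also have "\<dots> = (\<Sum>x<m. S x w * P x)" unfolding P_def
        by (simp add: sum_distrib_left sum.swap[of _ "{..<t}"])
      finally show ?thesis .
    qed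
    have "(\<Sum>i<t. q i) = (\<Sum>i<t. \<Sum>w<m'. c w * M i w)" unfolding q using t by (intro sum.cong) auto
    also have "\<dots> = (\<Sum>w<m'. c w * (\<Sum>i<t. M i w))"
      by (simp add: sum_distrib_left sum.swap[of _ "{..<t}"])
    also have "\<dots> \<le> (\<Sum>w<m'. c w * (\<Sum>x<m. S x w * P x))"
      using rw c0 by (intro sum_mono mult_left_mono) auto
    also have "\<dots> = (\<Sum>w<m'. \<Sum>x<m. c w * S x w * P x)"
      by (simp add: sum_distrib_left mult.assoc)
    also have "\<dots> = (\<Sum>x<m. \<Sum>w<m'. c w * S x w * P x)" by (rule sum.swap)
    also have "\<dots> = (\<Sum>x<m. a x * P x)" unfolding a_def by (simp add: sum_distrib_right)
    also have "\<dots> = (\<Sum>i<t. p i)" unfolding p_def P_def using t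
      by (simp add: sum_distrib_left sum.swap[of _ "{..<t}"])
    finally show "(\<Sum>i<t. q i) \<le> (\<Sum>i<t. p i)" .
  qed
  then have "majorizes n p q" using maj_sorted[OF pmono qmono] by simp
  then show "\<exists>p\<in>conv_channel n m N. majorizes n p q" using pin by blast
qed

lemma three_one:
  assumes S: "col_stochastic m m' S" and SM: "\<forall>w<m'. majorizes n (\<lambda>y. \<Sum>x<m. S x w * N y x) (\<lambda>y. M y w)"
    and nN: "\<forall>x<m. nonincreasing n (\<lambda>y. N y x)" and nM: "\<forall>w<m'. nonincreasing n (\<lambda>y. M y w)"
    and cN: "col_stochastic n m N" and cM: "col_stochastic n m' M"
  shows "channel_majorizes n m N m' M"
proof -
  have S0: "\<forall>w<m'. \<forall>x<m. 0 \<le> S x w" and S1: "\<forall>w<m'. (\<Sum>x<m. S x w) = 1"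
    using S by (auto simp: col_stochastic_def prob_vec_def)
  have "\<forall>w\<in>{..<m'}. \<exists>D. doubly_stochastic n D \<and> (\<forall>i<n. M i w = (\<Sum>j<n. D i j * (\<Sum>x<m. S x w * N j x)))"
  proof
    fix w assume "w \<in> {..<m'}"
    then have w: "w < m'" by simp
    have rmono: "nonincreasing n (\<lambda>y. \<Sum>x<m. S x w * N y x)" using comb_mono(2)[OF nN] S0 w by simp
    have pre: "\<forall>t\<le>n. (\<Sum>i<t. M i w) \<le> (\<Sum>i<t. \<Sum>x<m. S x w * N i x)"
      using maj_sorted[OF rmono, of "\<lambda>y. M y w"] SM nM w by auto
    have "(\<Sum>i<n. \<Sum>x<m. S x w * N i x) = (\<Sum>x<m. S x w * (\<Sum>i<n. N i x))"
      by (simp add: sum_distrib_left sum.swap[of _ "{..<n}"])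
    also have "\<dots> = (\<Sum>x<m. S x w)" using cN by (intro sum.cong) (auto simp: col_stochastic_def prob_vec_def)
    finally have tr: "(\<Sum>i<n. \<Sum>x<m. S x w * N i x) = 1" using S1 w by simp
    have tq: "(\<Sum>i<n. M i w) = 1" using cM w by (simp add: col_stochastic_def prob_vec_def)
    show "\<exists>D. doubly_stochastic n D \<and> (\<forall>i<n. M i w = (\<Sum>j<n. D i j * (\<Sum>x<m. S x w * N j x)))"
    proof -
      have nMw: "nonincreasing n (\<lambda>y. M y w)" using nM w by simp
      have tt: "(\<Sum>i<n. M i w) = (\<Sum>i<n. \<Sum>x<m. S x w * N i x)" using tr tq by simp
      show ?thesis by (rule hlp[OF refl rmono nMw pre tt])
    qed
  qed
  from bchoice[OF this] obtain D where D: "\<forall>w\<in>{..<m'}. doubly_stochastic n (D w) \<and> (\<forall>i<n. M i w = (\<Sum>j<n. D w i j * (\<Sum>x<m. S x w * N j x)))"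
    by blast
  define S' where "S' x z w = (if z = w then S x w else 0)" for x z w :: nat
  have f1: "\<forall>w<m'. (\<forall>x<m. \<forall>z<m'. 0 \<le> S' x z w) \<and> (\<Sum>x<m. \<Sum>z<m'. S' x z w) = 1"
  proof (intro allI impI)
    fix w assume w: "w < m'"
    have zs: "(\<Sum>z<m'. S' x z w) = S x w" for x
      unfolding S'_def using w by simp
    show "(\<forall>x<m. \<forall>z<m'. 0 \<le> S' x z w) \<and> (\<Sum>x<m. \<Sum>z<m'. S' x z w) = 1"
      using S0 S1 w by (auto simp: S'_def zs)
  qed
  have f2: "\<forall>z<m'. doubly_stochastic n (D z)" using D by auto
  have f3: "\<forall>w<m'. \<forall>y'<n. M y' w = (\<Sum>x<m. \<Sum>z<m'. S' x z w * (\<Sum>y<n. D z y' y * N y x))"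
  proof (intro allI impI)
    fix w y' assume w: "w < m'" and y': "y' < n"
    have "(\<Sum>x<m. \<Sum>z<m'. S' x z w * (\<Sum>y<n. D z y' y * N y x)) = (\<Sum>x<m. S x w * (\<Sum>y<n. D w y' y * N y x))"
    proof (rule sum.cong[OF refl])
      fix x
      have "(\<Sum>z<m'. S' x z w * (\<Sum>y<n. D z y' y * N y x)) = (\<Sum>z<m'. if z = w then S x w * (\<Sum>y<n. D w y' y * N y x) else 0)"
        by (rule sum.cong) (auto simp: S'_def)
      also have "\<dots> = S x w * (\<Sum>y<n. D w y' y * N y x)" using w by simp
      finally show "(\<Sum>z<m'. S' x z w * (\<Sum>y<n. D z y' y * N y x)) = S x w * (\<Sum>y<n. D w y' y * N y x)" .
    qed
    also have "\<dots> = (\<Sum>x<m. \<Sum>y<n. D w y' y * (S x w * N y x))"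
      by (simp add: sum_distrib_left mult_ac)
    also have "\<dots> = (\<Sum>y<n. \<Sum>x<m. D w y' y * (S x w * N y x))" by (rule sum.swap)
    also have "\<dots> = (\<Sum>y<n. D w y' y * (\<Sum>x<m. S x w * N y x))" by (simp add: sum_distrib_left)
    also have "\<dots> = M y' w" using D w y' by auto
    finally show "M y' w = (\<Sum>x<m. \<Sum>z<m'. S' x z w * (\<Sum>y<n. D z y' y * N y x))" by simp
  qed
  show ?thesis unfolding channel_majorizes_def
    by (intro exI[of _ m'] exI[of _ S'] exI[of _ D] conjI f1 f2 f3)
qed
lemma three_four:
  fixes N M :: "nat \<Rightarrow> nat \<Rightarrow> real" and n m m' :: nat
  assumes S: "col_stochastic m m' S" and SM: "\<forall>w<m'. majorizes n (\<lambda>y. \<Sum>x<m. S x w * N y x) (\<lambda>y. M y w)"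
    and nN: "\<forall>x<m. nonincreasing n (\<lambda>y. N y x)" and nM: "\<forall>w<m'. nonincreasing n (\<lambda>y. M y w)"
    and m: "0 < m" and m': "0 < m'"
    and s: "prob_vec_desc n s"
  shows "Max ((\<lambda>w. \<Sum>y<n. s y * M y w) ` {..<m'}) \<le> Max ((\<lambda>x. \<Sum>y<n. s y * N y x) ` {..<m})"
proof -
  have S0: "\<forall>w<m'. \<forall>x<m. 0 \<le> S x w" and S1: "\<forall>w<m'. (\<Sum>x<m. S x w) = 1"
    using S by (auto simp: col_stochastic_def prob_vec_def)
  have smono: "nonincreasing n s" and s0: "\<forall>i<n. 0 \<le> s i"
    using s by (auto simp: prob_vec_desc_def prob_vec_def)
  let ?MX = "Max ((\<lambda>x. \<Sum>y<n. s y * N y x) ` {..<m})"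
  have le: "(\<Sum>y<n. s y * M y w) \<le> ?MX" if w: "w < m'" for w
  proof -
    have rmono: "nonincreasing n (\<lambda>y. \<Sum>x<m. S x w * N y x)" using comb_mono(2)[OF nN] S0 w by simp
    have pre: "\<forall>t\<le>n. (\<Sum>i<t. M i w) \<le> (\<Sum>i<t. \<Sum>x<m. S x w * N i x)"
      using maj_sorted[OF rmono, of "\<lambda>y. M y w"] SM nM w by auto
    have "0 \<le> (\<Sum>i<n. s i * ((\<Sum>x<m. S x w * N i x) - M i w))"
      by (rule abel[OF smono s0]) (use pre in \<open>auto simp: sum_subtractf\<close>)
    then have "(\<Sum>y<n. s y * M y w) \<le> (\<Sum>y<n. s y * (\<Sum>x<m. S x w * N y x))"
      by (simp add: right_diff_distrib sum_subtractf)
    also have "\<dots> = (\<Sum>x<m. S x w * (\<Sum>y<n. s y * N y x))"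
    proof -
      have "(\<Sum>y<n. s y * (\<Sum>x<m. S x w * N y x)) = (\<Sum>y<n. \<Sum>x<m. S x w * (s y * N y x))"
        by (simp add: sum_distrib_left mult_ac)
      also have "\<dots> = (\<Sum>x<m. \<Sum>y<n. S x w * (s y * N y x))" by (rule sum.swap)
      also have "\<dots> = (\<Sum>x<m. S x w * (\<Sum>y<n. s y * N y x))" by (simp add: sum_distrib_left)
      finally show ?thesis .
    qed
    also have "\<dots> \<le> (\<Sum>x<m. S x w * ?MX)"
      using S0 w by (intro sum_mono mult_left_mono) auto
    also have "\<dots> = ?MX" using S1 w by (simp add: sum_distrib_right[symmetric])
    finally show ?thesis .
  qed
  show ?thesis using le m' by (subst Max_le_iff) auto
qed

lemma four_H:
  fixes N M :: "nat \<Rightarrow> nat \<Rightarrow> real" and n m m' w :: nat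
  assumes H4: "\<forall>s. prob_vec_desc n s \<longrightarrow>
              Max ((\<lambda>w. \<Sum>y<n. s y * M y w) ` {..<m'}) \<le> Max ((\<lambda>x. \<Sum>y<n. s y * N y x) ` {..<m})"
    and m: "0 < m" and w: "w < m'" and a0: "\<forall>k<n. 0 \<le> a k"
  shows "\<exists>x<m. (\<Sum>k<n. a k * (\<Sum>y<Suc k. M y w)) \<le> (\<Sum>k<n. a k * (\<Sum>y<Suc k. N y x))"
proof (cases "\<forall>k<n. a k = 0")
  case True
  then show ?thesis using m by (intro exI[of _ 0]) simp
next
  case False
  then obtain k0 where k0: "k0 < n" "a k0 \<noteq> 0" by auto
  define Z where "Z = (\<Sum>k<n. a k * real (Suc k))"
  have "a k0 * real (Suc k0) \<le> Z" unfolding Z_def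
    by (rule member_le_sum) (use k0 a0 in auto)
  moreover have "0 < a k0 * real (Suc k0)" using k0 a0 by (simp add: order_le_neq_trans)
  ultimately have Zpos: "0 < Z" by linarith
  define s where "s y = (\<Sum>k\<in>{y..<n}. a k) / Z" for y
  have iden: "(\<Sum>y<n. s y * p y) = (\<Sum>k<n. a k * (\<Sum>y<Suc k. p y)) / Z" for p
  proof -
    have "(\<Sum>y<n. s y * p y) = (\<Sum>y<n. (\<Sum>k\<in>{y..<n}. a k) * p y) / Z"
      unfolding s_def by (simp only: sum_divide_distrib[of _ "{..<n}"] times_divide_eq_left)
    also have "\<dots> = (\<Sum>k<n. a k * (\<Sum>y<Suc k. p y)) / Z" by (simp only: abel_identity)
    finally show ?thesis .
  qed
  have sdesc: "prob_vec_desc n s"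
  proof -
    have "\<forall>i<n. 0 \<le> s i" using a0 Zpos by (auto simp: s_def intro!: sum_nonneg divide_nonneg_pos)
    moreover have "(\<Sum>i<n. s i) = 1"
      using iden[of "\<lambda>_. 1"] Zpos by (simp add: Z_def)
    moreover have "nonincreasing n s"
      unfolding nonincreasing_def s_def
    proof (intro allI impI)
      fix i j assume "i \<le> j" "j < n"
      have "(\<Sum>k\<in>{j..<n}. a k) \<le> (\<Sum>k\<in>{i..<n}. a k)"
        using \<open>i \<le> j\<close> a0 by (intro sum_mono2) auto
      then show "(\<Sum>k\<in>{j..<n}. a k) / Z \<le> (\<Sum>k\<in>{i..<n}. a k) / Z" using Zpos by (simp add: divide_right_mono)
    qed
    ultimately show ?thesis by (simp add: prob_vec_desc_def prob_vec_def)
  qed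
  have fin1: "finite ((\<lambda>x. \<Sum>y<n. s y * N y x) ` {..<m})" by (rule finite_imageI) simp
  have ne1: "(\<lambda>x. \<Sum>y<n. s y * N y x) ` {..<m} \<noteq> {}" using m by auto
  obtain x0 where x0: "x0 < m" "Max ((\<lambda>x. \<Sum>y<n. s y * N y x) ` {..<m}) = (\<Sum>y<n. s y * N y x0)"
    using Max_in[OF fin1 ne1] by auto
  have "(\<Sum>y<n. s y * M y w) \<le> Max ((\<lambda>w. \<Sum>y<n. s y * M y w) ` {..<m'})"
    using w by (intro Max_ge) auto
  also have "\<dots> \<le> (\<Sum>y<n. s y * N y x0)" using H4 sdesc x0 by auto
  finally have "(\<Sum>k<n. a k * (\<Sum>y<Suc k. M y w)) / Z \<le> (\<Sum>k<n. a k * (\<Sum>y<Suc k. N y x0)) / Z"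
    by (simp add: iden)
  then have "(\<Sum>k<n. a k * (\<Sum>y<Suc k. M y w)) \<le> (\<Sum>k<n. a k * (\<Sum>y<Suc k. N y x0))"
    using Zpos by (simp add: divide_le_cancel)
  then show ?thesis using x0 by blast
qed

lemma gordan_idx:
  fixes f :: "'a \<Rightarrow> nat \<Rightarrow> real"
  assumes fin: "finite X" and ne: "X \<noteq> {}"
    and H: "\<forall>a. (\<forall>k<n. 0 \<le> a k) \<longrightarrow> (\<exists>x\<in>X. 0 \<le> (\<Sum>k<n. a k * f x k))"
  shows "\<exists>c. (\<forall>x\<in>X. 0 \<le> c x) \<and> (\<Sum>x\<in>X. c x) = 1 \<and> (\<forall>k<n. 0 \<le> (\<Sum>x\<in>X. c x * f x k))"
proof -
  have H': "\<forall>a. (\<forall>k<n. 0 \<le> a k) \<longrightarrow> (\<exists>v\<in>f ` X. 0 \<le> (\<Sum>k<n. a k * v k))"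
    using H by blast
  obtain c0 where c00: "\<forall>v\<in>f ` X. 0 \<le> c0 v" and c0pos: "0 < (\<Sum>v\<in>f ` X. c0 v)"
    and c0k: "\<forall>k<n. 0 \<le> (\<Sum>v\<in>f ` X. c0 v * v k)"
    using gordan_set[of "f ` X" n, OF _ _ H'] fin ne by auto
  define cnt where "cnt v = card {x \<in> X. f x = v}" for v
  have cntpos: "0 < cnt v" if "v \<in> f ` X" for v
    using that fin unfolding cnt_def by (auto simp: card_gt_0_iff)
  define d where "d x = c0 (f x) / real (cnt (f x))" for x
  have key: "(\<Sum>x\<in>X. d x * g (f x)) = (\<Sum>v\<in>f ` X. c0 v * g v)" for g :: "(nat \<Rightarrow> real) \<Rightarrow> real"
  proof -
    have "(\<Sum>x\<in>X. d x * g (f x)) = (\<Sum>v\<in>f ` X. \<Sum>x\<in>{x \<in> X. f x = v}. d x * g (f x))"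
      by (rule sum.image_gen[OF fin])
    also have "\<dots> = (\<Sum>v\<in>f ` X. c0 v * g v)"
    proof (rule sum.cong[OF refl])
      fix v assume v: "v \<in> f ` X"
      have "(\<Sum>x\<in>{x \<in> X. f x = v}. d x * g (f x)) = (\<Sum>x\<in>{x \<in> X. f x = v}. c0 v / real (cnt v) * g v)"
        by (rule sum.cong) (auto simp: d_def)
      also have "\<dots> = real (cnt v) * (c0 v / real (cnt v) * g v)" by (simp add: cnt_def)
      also have "\<dots> = c0 v * g v" using cntpos[OF v] by simp
      finally show "(\<Sum>x\<in>{x \<in> X. f x = v}. d x * g (f x)) = c0 v * g v" .
    qed
    finally show ?thesis .
  qed
  define T where "T = (\<Sum>v\<in>f ` X. c0 v)"
  have d0: "\<forall>x\<in>X. 0 \<le> d x" using c00 by (auto simp: d_def)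
  have dsum: "(\<Sum>x\<in>X. d x) = T" using key[of "\<lambda>_. 1"] by (simp add: T_def)
  have dk: "\<forall>k<n. 0 \<le> (\<Sum>x\<in>X. d x * f x k)" using key[of "\<lambda>v. v k" for k] c0k by simp
  have Tpos: "0 < T" using c0pos by (simp add: T_def)
  show ?thesis
  proof (intro exI[of _ "\<lambda>x. d x / T"] conjI)
    show "\<forall>x\<in>X. 0 \<le> d x / T" using d0 Tpos by auto
    show "(\<Sum>x\<in>X. d x / T) = 1" using dsum Tpos by (simp add: sum_divide_distrib[symmetric])
    show "\<forall>k<n. 0 \<le> (\<Sum>x\<in>X. d x / T * f x k)"
    proof (intro allI impI)
      fix k assume "k < n"
      then have "0 \<le> (\<Sum>x\<in>X. d x * f x k) / T" using dk Tpos by simp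
      also have "\<dots> = (\<Sum>x\<in>X. d x / T * f x k)" by (simp add: sum_divide_distrib)
      finally show "0 \<le> (\<Sum>x\<in>X. d x / T * f x k)" .
    qed
  qed
qed
lemma four_three:
  fixes N M :: "nat \<Rightarrow> nat \<Rightarrow> real" and n m m' :: nat
  assumes H4: "\<forall>s. prob_vec_desc n s \<longrightarrow>
              Max ((\<lambda>w. \<Sum>y<n. s y * M y w) ` {..<m'}) \<le> Max ((\<lambda>x. \<Sum>y<n. s y * N y x) ` {..<m})"
    and m: "0 < m"
    and nN: "\<forall>x<m. nonincreasing n (\<lambda>y. N y x)" and nM: "\<forall>w<m'. nonincreasing n (\<lambda>y. M y w)"
  shows "\<exists>S. col_stochastic m m' S \<and> (\<forall>w<m'. majorizes n (\<lambda>y. \<Sum>x<m. S x w * N y x) (\<lambda>y. M y w))"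
proof -
  have "\<forall>w\<in>{..<m'}. \<exists>c. prob_vec m c \<and> majorizes n (\<lambda>y. \<Sum>x<m. c x * N y x) (\<lambda>y. M y w)"
  proof
    fix w assume "w \<in> {..<m'}"
    then have w: "w < m'" by simp
    define f where "f x k = (\<Sum>y<Suc k. N y x) - (\<Sum>y<Suc k. M y w)" for x k
    have H: "\<forall>a. (\<forall>k<n. 0 \<le> a k) \<longrightarrow> (\<exists>x\<in>{..<m}. 0 \<le> (\<Sum>k<n. a k * f x k))"
    proof (intro allI impI)
      fix a :: "nat \<Rightarrow> real" assume a0: "\<forall>k<n. 0 \<le> a k"
      obtain x where x: "x < m" "(\<Sum>k<n. a k * (\<Sum>y<Suc k. M y w)) \<le> (\<Sum>k<n. a k * (\<Sum>y<Suc k. N y x))"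
        using four_H[OF H4 m w a0] by blast
      have "(\<Sum>k<n. a k * f x k) = (\<Sum>k<n. a k * (\<Sum>y<Suc k. N y x)) - (\<Sum>k<n. a k * (\<Sum>y<Suc k. M y w))"
        unfolding f_def by (simp only: right_diff_distrib sum_subtractf)
      then show "\<exists>x\<in>{..<m}. 0 \<le> (\<Sum>k<n. a k * f x k)" using x by (intro bexI[of _ x]) auto
    qed
    obtain c where c0: "\<forall>x\<in>{..<m}. 0 \<le> c x" and c1: "(\<Sum>x\<in>{..<m}. c x) = 1"
      and ck: "\<forall>k<n. 0 \<le> (\<Sum>x\<in>{..<m}. c x * f x k)"
      using gordan_idx[OF _ _ H] m by auto
    have cprob: "prob_vec m c" using c0 c1 by (simp add: prob_vec_def)
    have c0': "\<forall>x<m. 0 \<le> c x" using c0 by simp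
    have rmono: "nonincreasing n (\<lambda>y. \<Sum>x<m. c x * N y x)" by (rule comb_mono(2)[OF nN c0'])
    have pre: "\<forall>t\<le>n. (\<Sum>i<t. M i w) \<le> (\<Sum>i<t. \<Sum>x<m. c x * N i x)"
    proof (intro allI impI)
      fix t assume t: "t \<le> n"
      show "(\<Sum>i<t. M i w) \<le> (\<Sum>i<t. \<Sum>x<m. c x * N i x)"
      proof (cases t)
        case 0 then show ?thesis by simp
      next
        case (Suc k)
        then have k: "k < n" using t by simp
        have e1: "(\<Sum>x<m. c x * f x k) = (\<Sum>x<m. c x * (\<Sum>y<Suc k. N y x)) - (\<Sum>x<m. c x) * (\<Sum>y<Suc k. M y w)"
          unfolding f_def by (simp only: right_diff_distrib sum_subtractf sum_distrib_right)
        have e2: "(\<Sum>x<m. c x * (\<Sum>y<Suc k. N y x)) = (\<Sum>i<Suc k. \<Sum>x<m. c x * N i x)"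
          unfolding sum_distrib_left by (rule sum.swap)
        have "0 \<le> (\<Sum>x<m. c x * f x k)" using ck k by simp
        then show ?thesis using e1 e2 c1 Suc by simp
      qed
    qed
    have "majorizes n (\<lambda>y. \<Sum>x<m. c x * N y x) (\<lambda>y. M y w)"
      using maj_sorted[OF rmono, of "\<lambda>y. M y w"] nM w pre by simp
    then show "\<exists>c. prob_vec m c \<and> majorizes n (\<lambda>y. \<Sum>x<m. c x * N y x) (\<lambda>y. M y w)" using cprob by blast
  qed
  from bchoice[OF this] obtain C where C: "\<forall>w\<in>{..<m'}. prob_vec m (C w) \<and> majorizes n (\<lambda>y. \<Sum>x<m. C w x * N y x) (\<lambda>y. M y w)"
    by blast
  show ?thesis
    by (intro exI[of _ "\<lambda>x w. C w x"]) (use C in \<open>auto simp: col_stochastic_def\<close>)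
qed

lemma four_five:
  fixes N M :: "nat \<Rightarrow> nat \<Rightarrow> real" and n m m' w :: nat
  assumes H4: "\<forall>s. prob_vec_desc n s \<longrightarrow>
              Max ((\<lambda>w. \<Sum>y<n. s y * M y w) ` {..<m'}) \<le> Max ((\<lambda>x. \<Sum>y<n. s y * N y x) ` {..<m})"
    and m: "0 < m" and cM: "col_stochastic n m' M"
    and nN: "\<forall>x<m. nonincreasing n (\<lambda>y. N y x)" and nM: "\<forall>w<m'. nonincreasing n (\<lambda>y. M y w)"
    and t: "prob_vec n t" and w: "w < m'"
  shows "1 \<le> Max ((\<lambda>x. \<Sum>k<n. t k * (kyfan n (\<lambda>y. N y x) (Suc k)
                                           / kyfan n (\<lambda>y. M y w) (Suc k))) ` {..<m})"
proof -
  define Q where "Q k = (\<Sum>y<Suc k. M y w)" for k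
  have Qp: "0 < Q k" if "k < n" for k
    using Qpos[of n "\<lambda>y. M y w" k] cM nM w that by (auto simp: Q_def col_stochastic_def)
  have ky: "kyfan n (\<lambda>y. N y x) (Suc k) = (\<Sum>y<Suc k. N y x)" if "x < m" "k < n" for x k
    using kyfan_sorted[of n "\<lambda>y. N y x" "Suc k"] nN that by simp
  have kyM: "kyfan n (\<lambda>y. M y w) (Suc k) = Q k" if "k < n" for k
    using kyfan_sorted[of n "\<lambda>y. M y w" "Suc k"] nM w that by (simp add: Q_def)
  define a where "a k = t k / Q k" for k
  have t0: "\<forall>k<n. 0 \<le> t k" and t1: "(\<Sum>k<n. t k) = 1" using t by (auto simp: prob_vec_def)
  have a0: "\<forall>k<n. 0 \<le> a k" using t0 Qp by (auto simp: a_def intro!: divide_nonneg_pos)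
  obtain x where x: "x < m" "(\<Sum>k<n. a k * (\<Sum>y<Suc k. M y w)) \<le> (\<Sum>k<n. a k * (\<Sum>y<Suc k. N y x))"
    using four_H[OF H4 m w a0] by blast
  have "(\<Sum>k<n. a k * (\<Sum>y<Suc k. M y w)) = (\<Sum>k<n. t k)"
  proof (rule sum.cong[OF refl])
    fix k assume "k \<in> {..<n}"
    then have "0 < Q k" using Qp by simp
    then show "a k * (\<Sum>y<Suc k. M y w) = t k" unfolding Q_def[symmetric] a_def by simp
  qed
  then have one: "1 \<le> (\<Sum>k<n. a k * (\<Sum>y<Suc k. N y x))" using x t1 by simp
  have val: "(\<Sum>k<n. t k * (kyfan n (\<lambda>y. N y x) (Suc k) / kyfan n (\<lambda>y. M y w) (Suc k)))
      = (\<Sum>k<n. a k * (\<Sum>y<Suc k. N y x))"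
    using ky[OF x(1)] kyM by (intro sum.cong) (auto simp: a_def)
  have "(\<Sum>k<n. t k * (kyfan n (\<lambda>y. N y x) (Suc k) / kyfan n (\<lambda>y. M y w) (Suc k)))
      \<le> Max ((\<lambda>x. \<Sum>k<n. t k * (kyfan n (\<lambda>y. N y x) (Suc k) / kyfan n (\<lambda>y. M y w) (Suc k))) ` {..<m})"
    using x(1) by (intro Max_ge) auto
  then show ?thesis using one val by simp
qed

lemma five_four:
  fixes N M :: "nat \<Rightarrow> nat \<Rightarrow> real" and n m m' :: nat
  assumes H5: "\<forall>t. prob_vec n t \<longrightarrow> (\<forall>w<m'.
              1 \<le> Max ((\<lambda>x. \<Sum>k<n. t k * (kyfan n (\<lambda>y. N y x) (Suc k)
                                           / kyfan n (\<lambda>y. M y w) (Suc k))) ` {..<m}))"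
    and m: "0 < m" and m': "0 < m'" and cN: "col_stochastic n m N" and cM: "col_stochastic n m' M"
    and nN: "\<forall>x<m. nonincreasing n (\<lambda>y. N y x)" and nM: "\<forall>w<m'. nonincreasing n (\<lambda>y. M y w)"
    and s: "prob_vec_desc n s"
  shows "Max ((\<lambda>w. \<Sum>y<n. s y * M y w) ` {..<m'}) \<le> Max ((\<lambda>x. \<Sum>y<n. s y * N y x) ` {..<m})"
proof -
  have smono: "nonincreasing n s" and s0: "\<forall>i<n. 0 \<le> s i"
    using s by (auto simp: prob_vec_desc_def prob_vec_def)
  define s' where "s' k = (if k < n then s k else 0)" for k
  define a where "a k = s' k - s' (Suc k)" for k
  have a0: "\<forall>k<n. 0 \<le> a k"
  proof (intro allI impI)
    fix k assume k: "k < n"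
    show "0 \<le> a k"
    proof (cases "Suc k < n")
      case True then show ?thesis using smono k by (simp add: a_def s'_def nonincreasing_def)
    next
      case False then show ?thesis using s0 k by (simp add: a_def s'_def)
    qed
  qed
  have tel: "(\<Sum>k\<in>{y..<n}. a k) = s y" if y: "y < n" for y
  proof -
    have "(\<Sum>k\<in>{y..<n}. s' (Suc k) - s' k) = s' n - s' y" using y by (intro sum_Suc_diff') simp
    then have "(\<Sum>k\<in>{y..<n}. a k) = s' y - s' n"
      unfolding a_def by (simp add: sum_subtractf)
    then show ?thesis using y by (simp add: s'_def)
  qed
  have rep: "(\<Sum>y<n. s y * p y) = (\<Sum>k<n. a k * (\<Sum>y<Suc k. p y))" for p
  proof -
    have "(\<Sum>y<n. s y * p y) = (\<Sum>y<n. (\<Sum>k\<in>{y..<n}. a k) * p y)"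
      using tel by (intro sum.cong) auto
    also have "\<dots> = (\<Sum>k<n. a k * (\<Sum>y<Suc k. p y))" by (rule abel_identity)
    finally show ?thesis .
  qed
  let ?MX = "Max ((\<lambda>x. \<Sum>y<n. s y * N y x) ` {..<m})"
  have MXge: "(\<Sum>y<n. s y * N y x) \<le> ?MX" if "x < m" for x using that by (intro Max_ge) auto
  have finW: "finite ((\<lambda>w. \<Sum>y<n. s y * M y w) ` {..<m'})" by (rule finite_imageI) simp
  have neW: "(\<lambda>w. \<Sum>y<n. s y * M y w) ` {..<m'} \<noteq> {}" using m' by auto
  obtain w0 where w0: "w0 < m'" "Max ((\<lambda>w. \<Sum>y<n. s y * M y w) ` {..<m'}) = (\<Sum>y<n. s y * M y w0)"
    using Max_in[OF finW neW] by auto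
  define B where "B = (\<Sum>y<n. s y * M y w0)"
  show ?thesis
  proof (cases "B \<le> 0")
    case True
    have "0 \<le> (\<Sum>y<n. s y * N y 0)"
      using s0 cN m by (intro sum_nonneg mult_nonneg_nonneg) (auto simp: col_stochastic_def prob_vec_def)
    also have "\<dots> \<le> ?MX" using MXge m by simp
    finally show ?thesis using True w0 by (simp add: B_def)
  next
    case False
    then have Bpos: "0 < B" by simp
    define Q where "Q k = (\<Sum>y<Suc k. M y w0)" for k
    have Qp: "0 < Q k" if "k < n" for k
      using Qpos[of n "\<lambda>y. M y w0" k] cM nM w0 that by (auto simp: Q_def col_stochastic_def)
    have BQ: "B = (\<Sum>k<n. a k * Q k)" unfolding B_def Q_def by (rule rep)
    define t where "t k = a k * Q k / B" for k
    have tprob: "prob_vec n t"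
    proof -
      have "0 \<le> t k" if k: "k < n" for k
        unfolding t_def using a0 Qp[OF k] Bpos k by (intro divide_nonneg_pos mult_nonneg_nonneg) auto
      then have "\<forall>k<n. 0 \<le> t k" by blast
      moreover have "(\<Sum>k<n. t k) = 1" using BQ Bpos unfolding t_def by (simp add: sum_divide_distrib[symmetric])
      ultimately show ?thesis by (simp add: prob_vec_def)
    qed
    have H: "1 \<le> Max ((\<lambda>x. \<Sum>k<n. t k * (kyfan n (\<lambda>y. N y x) (Suc k) / kyfan n (\<lambda>y. M y w0) (Suc k))) ` {..<m})"
      using H5 tprob w0(1) by blast
    have fin1: "finite ((\<lambda>x. \<Sum>k<n. t k * (kyfan n (\<lambda>y. N y x) (Suc k) / kyfan n (\<lambda>y. M y w0) (Suc k))) ` {..<m})"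
      by (rule finite_imageI) simp
    have ne1: "(\<lambda>x. \<Sum>k<n. t k * (kyfan n (\<lambda>y. N y x) (Suc k) / kyfan n (\<lambda>y. M y w0) (Suc k))) ` {..<m} \<noteq> {}"
      using m by auto
    obtain x0 where x0: "x0 < m"
      "Max ((\<lambda>x. \<Sum>k<n. t k * (kyfan n (\<lambda>y. N y x) (Suc k) / kyfan n (\<lambda>y. M y w0) (Suc k))) ` {..<m})
        = (\<Sum>k<n. t k * (kyfan n (\<lambda>y. N y x0) (Suc k) / kyfan n (\<lambda>y. M y w0) (Suc k)))"
      using Max_in[OF fin1 ne1] by auto
    have "(\<Sum>k<n. t k * (kyfan n (\<lambda>y. N y x0) (Suc k) / kyfan n (\<lambda>y. M y w0) (Suc k)))
        = (\<Sum>k<n. a k * (\<Sum>y<Suc k. N y x0) / B)"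
    proof (rule sum.cong[OF refl])
      fix k assume "k \<in> {..<n}"
      then have k: "k < n" by simp
      have "kyfan n (\<lambda>y. N y x0) (Suc k) = (\<Sum>y<Suc k. N y x0)"
        using kyfan_sorted[of n "\<lambda>y. N y x0" "Suc k"] nN x0(1) k by simp
      moreover have "kyfan n (\<lambda>y. M y w0) (Suc k) = Q k"
        using kyfan_sorted[of n "\<lambda>y. M y w0" "Suc k"] nM w0(1) k by (simp add: Q_def)
      ultimately show "t k * (kyfan n (\<lambda>y. N y x0) (Suc k) / kyfan n (\<lambda>y. M y w0) (Suc k))
          = a k * (\<Sum>y<Suc k. N y x0) / B"
        using Qp[OF k] Bpos by (simp add: t_def field_simps)
    qed
    also have "\<dots> = (\<Sum>k<n. a k * (\<Sum>y<Suc k. N y x0)) / B" by (simp add: sum_divide_distrib)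
    also have "\<dots> = (\<Sum>y<n. s y * N y x0) / B" by (simp add: rep)
    finally have "1 \<le> (\<Sum>y<n. s y * N y x0) / B" using H x0(2) by simp
    then have "B \<le> (\<Sum>y<n. s y * N y x0)" using Bpos by (simp add: le_divide_eq)
    also have "\<dots> \<le> ?MX" using MXge x0(1) by simp
    finally show ?thesis using w0 by (simp add: B_def)
  qed
qed
theorem theorem8:
  fixes n m m' :: nat and N M :: "nat \<Rightarrow> nat \<Rightarrow> real"
  assumes "0 < n" and "0 < m" and "0 < m'"
    and "col_stochastic n m N" and "col_stochastic n m' M"
    and "\<forall>x<m. nonincreasing n (\<lambda>y. N y x)"
    and "\<forall>w<m'. nonincreasing n (\<lambda>y. M y w)"
  shows
   "(channel_majorizes n m N m' M
       \<longleftrightarrow> set_majorizes n (conv_channel n m N) (conv_channel n m' M)) \<and>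
    (set_majorizes n (conv_channel n m N) (conv_channel n m' M)
       \<longleftrightarrow> (\<exists>S. col_stochastic m m' S \<and>
              (\<forall>w<m'. majorizes n (\<lambda>y. \<Sum>x<m. S x w * N y x) (\<lambda>y. M y w)))) \<and>
    ((\<exists>S. col_stochastic m m' S \<and>
              (\<forall>w<m'. majorizes n (\<lambda>y. \<Sum>x<m. S x w * N y x) (\<lambda>y. M y w)))
       \<longleftrightarrow> (\<forall>s. prob_vec_desc n s \<longrightarrow>
              Max ((\<lambda>w. \<Sum>y<n. s y * M y w) ` {..<m'})
                \<le> Max ((\<lambda>x. \<Sum>y<n. s y * N y x) ` {..<m}))) \<and>
    ((\<forall>s. prob_vec_desc n s \<longrightarrow>
              Max ((\<lambda>w. \<Sum>y<n. s y * M y w) ` {..<m'})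
                \<le> Max ((\<lambda>x. \<Sum>y<n. s y * N y x) ` {..<m}))
       \<longleftrightarrow> (\<forall>t. prob_vec n t \<longrightarrow> (\<forall>w<m'.
              1 \<le> Max ((\<lambda>x. \<Sum>k<n. t k * (kyfan n (\<lambda>y. N y x) (Suc k)
                                           / kyfan n (\<lambda>y. M y w) (Suc k))) ` {..<m}))))"
proof -
  note m = assms(2) and m' = assms(3) and cN = assms(4) and cM = assms(5)
    and nN = assms(6) and nM = assms(7)
  let ?C1 = "channel_majorizes n m N m' M"
  let ?C2 = "set_majorizes n (conv_channel n m N) (conv_channel n m' M)"
  let ?C3 = "\<exists>S. col_stochastic m m' S \<and>
              (\<forall>w<m'. majorizes n (\<lambda>y. \<Sum>x<m. S x w * N y x) (\<lambda>y. M y w))"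
  let ?C4 = "\<forall>s. prob_vec_desc n s \<longrightarrow>
              Max ((\<lambda>w. \<Sum>y<n. s y * M y w) ` {..<m'})
                \<le> Max ((\<lambda>x. \<Sum>y<n. s y * N y x) ` {..<m})"
  let ?C5 = "\<forall>t. prob_vec n t \<longrightarrow> (\<forall>w<m'.
              1 \<le> Max ((\<lambda>x. \<Sum>k<n. t k * (kyfan n (\<lambda>y. N y x) (Suc k)
                                           / kyfan n (\<lambda>y. M y w) (Suc k))) ` {..<m}))"
  have i23: "?C2 \<Longrightarrow> ?C3" by (rule two_three[OF _ nN nM])
  have i32: "?C3 \<Longrightarrow> ?C2"
  proof -
    assume ?C3
    then obtain S where S: "col_stochastic m m' S" "\<forall>w<m'. majorizes n (\<lambda>y. \<Sum>x<m. S x w * N y x) (\<lambda>y. M y w)"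
      by blast
    show ?C2 by (rule three_two[OF S nN nM])
  qed
  have i31: "?C3 \<Longrightarrow> ?C1"
  proof -
    assume ?C3
    then obtain S where S: "col_stochastic m m' S" "\<forall>w<m'. majorizes n (\<lambda>y. \<Sum>x<m. S x w * N y x) (\<lambda>y. M y w)"
      by blast
    show ?C1 by (rule three_one[OF S nN nM cN cM])
  qed
  have i12: "?C1 \<Longrightarrow> ?C2" by (rule one_two[OF _ nN nM])
  have i34: "?C3 \<Longrightarrow> ?C4"
  proof -
    assume ?C3
    then obtain S where S: "col_stochastic m m' S" "\<forall>w<m'. majorizes n (\<lambda>y. \<Sum>x<m. S x w * N y x) (\<lambda>y. M y w)"
      by blast
    show ?C4 using three_four[OF S nN nM m m'] by blast
  qed
  have i43: "?C4 \<Longrightarrow> ?C3" by (rule four_three[OF _ m nN nM])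
  have i45: "?C4 \<Longrightarrow> ?C5"
  proof -
    assume h: ?C4
    show ?C5 using four_five[OF h m cM nN nM] by blast
  qed
  have i54: "?C5 \<Longrightarrow> ?C4"
  proof -
    assume h: ?C5
    show ?C4 using five_four[OF h m m' cN cM nN nM] by blast
  qed
  have "?C1 \<longleftrightarrow> ?C2" using i12 i23 i31 by blast
  moreover have "?C2 \<longleftrightarrow> ?C3" using i23 i32 by blast
  moreover have "?C3 \<longleftrightarrow> ?C4" using i34 i43 by blast
  moreover have "?C4 \<longleftrightarrow> ?C5" using i45 i54 by blast
  ultimately show ?thesis by blast
qed

end
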